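(* Let $H$ be a linear forest and let $k\ge 1$, $n\ge 1$ be integers. Then for every complete $k$-partite graph $G$ on $n$ vertices (with parts $A_1,\dots,A_k$ partitioning the vertex set, some possibly empty), $$\mathcal{N}(H,G)\le \mathcal{N}(H,T(n,k)).$$
   Context: $\mathcal{N}(H,G)$ denotes the number of (not necessarily induced) subgraphs of $G$ isomorphic to $H$. A linear forest is a graph each of whose connected components is a path. The Turán graph $T(n,k)$ is the complete $k$-partite graph on $n$ vertices with each part of size $\lfloor n/k\rfloor$ or $\lceil n/k\rceil$. A complete $k$-partite graph with parts $A_1,\dots,A_k$ has an edge between two vertices exactly when they lie in different parts. *)

theory Defs
  imports Main
begin

definition wf_graph :: "'a set \<Rightarrow> 'a set set \<Rightarrow> bool" where
  "wf_graph V E \<longleftrightarrow> finite V \<and> (\<forall>e\<in>E. \<exists>u v. e = {u, v} \<and> u \<noteq> v \<and> u \<in> V \<and> v \<in> V)"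

definition graph_iso :: "'a set \<Rightarrow> 'a set set \<Rightarrow> 'b set \<Rightarrow> 'b set set \<Rightarrow> bool" where
  "graph_iso V1 E1 V2 E2 \<longleftrightarrow> (\<exists>f. bij_betw f V1 V2 \<and> (\<lambda>e. f ` e) ` E1 = E2)"

text \<open>N(H,G): number of (not necessarily induced) subgraphs of G isomorphic to H.\<close>

definition num_copies :: "'b set \<Rightarrow> 'b set set \<Rightarrow> 'a set \<Rightarrow> 'a set set \<Rightarrow> nat" where
  "num_copies VH EH VG EG =
     card {(V', E'). V' \<subseteq> VG \<and> E' \<subseteq> EG \<and> (\<forall>e\<in>E'. e \<subseteq> V') \<and> graph_iso V' E' VH EH}"

definition path_edges :: "nat \<Rightarrow> nat set set" where
  "path_edges m = {{i, Suc i} | i. Suc i < m}"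

definition is_path :: "'a set \<Rightarrow> 'a set set \<Rightarrow> bool" where
  "is_path V E \<longleftrightarrow> (\<exists>m\<ge>1. graph_iso V E {0..<m} (path_edges m))"

definition linear_forest :: "'a set \<Rightarrow> 'a set set \<Rightarrow> bool" where
  "linear_forest V E \<longleftrightarrow> wf_graph V E \<and>
     (\<exists>P. (\<Union>P = V) \<and> (\<forall>B\<in>P. \<forall>B'\<in>P. B \<noteq> B' \<longrightarrow> B \<inter> B' = {}) \<and>
          (\<forall>e\<in>E. \<exists>B\<in>P. e \<subseteq> B) \<and>
          (\<forall>B\<in>P. is_path B {e\<in>E. e \<subseteq> B}))"

definition cmp_edges :: "nat \<Rightarrow> (nat \<Rightarrow> 'a set) \<Rightarrow> 'a set set" where
  "cmp_edges k A = {{u, v} | u v i j. i < k \<and> j < k \<and> i \<noteq> j \<and> u \<in> A i \<and> v \<in> A j}"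

definition is_partition_into :: "nat \<Rightarrow> (nat \<Rightarrow> 'a set) \<Rightarrow> 'a set \<Rightarrow> bool" where
  "is_partition_into k A V \<longleftrightarrow> (\<Union>i<k. A i) = V \<and> (\<forall>i<k. \<forall>j<k. i \<noteq> j \<longrightarrow> A i \<inter> A j = {})"

text \<open>Turan graph T(n,k) on vertex set {0..<n}: vertex v lies in part v mod k, so the parts have
  sizes floor(n/k) or ceiling(n/k).\<close>

definition turan_parts :: "nat \<Rightarrow> nat \<Rightarrow> nat \<Rightarrow> nat set" where
  "turan_parts n k i = {v. v < n \<and> v mod k = i}"

definition turan_edges :: "nat \<Rightarrow> nat \<Rightarrow> nat set set" where
  "turan_edges n k = cmp_edges k (turan_parts n k)"

end

theory Submission
  imports Defs "HOL-Library.FuncSet"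
begin

fun ff :: "nat \<Rightarrow> nat \<Rightarrow> nat" where
  "ff x 0 = 1"
| "ff x (Suc p) = ff x p * (x - p)"

lemma ff_Suc': "ff x (Suc p) = x * ff (x - 1) p"
  by (induction p) (auto simp: algebra_simps)

lemma ff_zero: "x < p \<Longrightarrow> ff x p = 0"
proof (induction p)
  case (Suc p)
  then show ?case by (cases "x = p") auto
qed auto

lemma ff_split:
  "ff x (Suc p) * ff y p * ff (x + y - 2*p - 1) m + ff x p * ff y (Suc p) * ff (x + y - 2*p - 1) m
   = ff x p * ff y p * ff (x + y - 2*p) (Suc m)"
proof (cases "p \<le> x \<and> p \<le> y")
  case True
  define q where "q = x - p"
  define r where "r = y - p"
  have e1: "x + y - 2*p = q + r" "x + y - 2*p - 1 = q + r - 1" using True unfolding q_def r_def by auto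
  have "ff (q + r) (Suc m) = (q + r) * ff (q + r - 1) m" by (rule ff_Suc')
  then show ?thesis unfolding e1 by (simp add: q_def r_def distrib_left distrib_right)
next
  case False
  then have "ff x p * ff y p = 0" using ff_zero by (auto simp: not_le)
  moreover have "ff x (Suc p) * ff y p = 0" "ff x p * ff y (Suc p) = 0" using False ff_zero
    by (auto simp: not_le)
  ultimately show ?thesis by (metis add_0 mult_0 mult_zero_left)
qed

lemma ff_mono_pair: "y + 1 \<le> x \<Longrightarrow> ff x p * ff y p \<le> ff (x - 1) p * ff (y + 1) p"
proof (induction p)
  case (Suc p)
  have "(x - p) * (y - p) \<le> (x - 1 - p) * (y + 1 - p)"
  proof (cases "p \<le> y")
    case True
    define a where "a = x - 1 - y"
    define b where "b = y - p"
    have "x - p = Suc a + b" "y - p = b" "x - 1 - p = a + b" "y + 1 - p = Suc b"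
      using Suc.prems True unfolding a_def b_def by auto
    then show ?thesis by (simp add: algebra_simps)
  qed auto
  from mult_le_mono[OF Suc.IH[OF Suc.prems] this]
  have h: "ff x p * ff y p * ((x - p) * (y - p)) \<le> ff (x - 1) p * ff (y + 1) p * ((x - 1 - p) * (y + 1 - p))" .
  have e1: "ff x (Suc p) * ff y (Suc p) = ff x p * ff y p * ((x - p) * (y - p))" by (simp only: ff.simps mult_ac)
  have e2: "ff (x - 1) (Suc p) * ff (y + 1) (Suc p) = ff (x - 1) p * ff (y + 1) p * ((x - 1 - p) * (y + 1 - p))" by (simp only: ff.simps mult_ac)
  show ?case unfolding e1 e2 by (rule h)
qed auto

definition bip :: "nat set \<Rightarrow> nat set \<Rightarrow> 'a set \<Rightarrow> 'a set \<Rightarrow> (nat \<Rightarrow> 'a) set" where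
  "bip L U X Y = {f \<in> U \<rightarrow>\<^sub>E (X \<union> Y). inj_on f U \<and>
      (\<forall>h\<in>L. h \<in> U \<longrightarrow> Suc h \<in> U \<longrightarrow> (f h \<in> X \<longleftrightarrow> f (Suc h) \<in> Y))}"

definition bipS :: "nat set \<Rightarrow> nat set \<Rightarrow> 'a set \<Rightarrow> 'a set \<Rightarrow> 'a set \<Rightarrow> (nat \<Rightarrow> 'a) set" where
  "bipS L U X Y S = {f \<in> bip L U X Y. f (Min U) \<in> S}"

lemma bip_swap: "X \<inter> Y = {} \<Longrightarrow> bip L U X Y = bip L U Y X"
  unfolding bip_def by (auto simp: PiE_iff)

lemma bip_finite: "finite U \<Longrightarrow> finite X \<Longrightarrow> finite Y \<Longrightarrow> finite (bip L U X Y)"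
proof -
  assume a: "finite U" "finite X" "finite Y"
  have "bip L U X Y \<subseteq> U \<rightarrow>\<^sub>E (X \<union> Y)" unfolding bip_def by auto
  moreover have "finite (U \<rightarrow>\<^sub>E (X \<union> Y))" using a by (intro finite_PiE) auto
  ultimately show ?thesis by (rule finite_subset)
qed

lemma bip_fiber:
  assumes U: "finite U" "U \<noteq> {}" and z: "z \<in> X" and XY: "X \<inter> Y = {}"
  defines "u0 \<equiv> Min U"
  shows "card {f \<in> bip L U X Y. f u0 = z} =
    card (if u0 \<in> L \<and> Suc u0 \<in> U then bipS L (U - {u0}) (X - {z}) Y Y else bip L (U - {u0}) (X - {z}) Y)"
proof -
  let ?U' = "U - {u0}"
  let ?T = "if u0 \<in> L \<and> Suc u0 \<in> U then bipS L ?U' (X - {z}) Y Y else bip L ?U' (X - {z}) Y"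
  have u0U: "u0 \<in> U" using U unfolding u0_def by simp
  have u0min: "\<And>h. h \<in> U \<Longrightarrow> u0 \<le> h" using U unfolding u0_def by simp
  have minU': "Suc u0 \<in> U \<Longrightarrow> Min ?U' = Suc u0"
  proof -
    assume "Suc u0 \<in> U"
    then have "Suc u0 \<in> ?U'" by simp
    moreover have "\<And>h. h \<in> ?U' \<Longrightarrow> Suc u0 \<le> h" using u0min by (metis DiffE Suc_leI insertI1 le_neq_implies_less)
    ultimately show ?thesis using U by (intro Min_eqI) auto
  qed
  have zY: "z \<notin> Y" using z XY by blast
  show ?thesis
  proof (rule bij_betw_same_card[where f = "\<lambda>f. restrict f (U - {u0})"], rule bij_betw_byWitness[where f' = "\<lambda>f'. f'(u0 := z)"])
    show "\<forall>f\<in>{f \<in> bip L U X Y. f u0 = z}. (restrict f ?U')(u0 := z) = f"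
    proof
      fix f assume f: "f \<in> {f \<in> bip L U X Y. f u0 = z}"
      show "(restrict f ?U')(u0 := z) = f"
      proof
        fix h show "((restrict f ?U')(u0 := z)) h = f h"
          using f u0U unfolding bip_def by (auto simp: PiE_iff extensional_def)
      qed
    qed
  next
    show "\<forall>f'\<in>?T. restrict (f'(u0 := z)) ?U' = f'"
    proof
      fix f' assume f': "f' \<in> ?T"
      then have "f' \<in> ?U' \<rightarrow>\<^sub>E (X - {z} \<union> Y)" by (auto simp: bip_def bipS_def split: if_splits)
      then show "restrict (f'(u0 := z)) ?U' = f'"
        by (auto simp: PiE_iff extensional_def restrict_def fun_eq_iff)
    qed
  next
    show "(\<lambda>f. restrict f ?U') ` {f \<in> bip L U X Y. f u0 = z} \<subseteq> ?T"
    proof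
      fix g assume "g \<in> (\<lambda>f. restrict f ?U') ` {f \<in> bip L U X Y. f u0 = z}"
      then obtain f where f: "f \<in> bip L U X Y" "f u0 = z" and g: "g = restrict f ?U'" by blast
      have fP: "f \<in> U \<rightarrow>\<^sub>E (X \<union> Y)" and fi: "inj_on f U"
        and fe: "\<And>h. h\<in>L \<Longrightarrow> h \<in> U \<Longrightarrow> Suc h \<in> U \<Longrightarrow> (f h \<in> X \<longleftrightarrow> f (Suc h) \<in> Y)"
        using f unfolding bip_def by auto
      have nz: "\<And>h. h \<in> ?U' \<Longrightarrow> f h \<noteq> z" using fi u0U f(2) by (metis DiffE inj_on_def singletonI)
      have gb: "g \<in> bip L ?U' (X - {z}) Y"
        unfolding bip_def g
      proof (intro CollectI conjI)
        show "restrict f ?U' \<in> ?U' \<rightarrow>\<^sub>E (X - {z} \<union> Y)" using fP nz by (auto simp: PiE_iff)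
        show "inj_on (restrict f ?U') ?U'" using fi by (auto simp: inj_on_def)
        show "\<forall>h\<in>L. h \<in> ?U' \<longrightarrow> Suc h \<in> ?U' \<longrightarrow> (restrict f ?U' h \<in> X - {z} \<longleftrightarrow> restrict f ?U' (Suc h) \<in> Y)"
          using fe nz by auto
      qed
      show "g \<in> ?T"
      proof (cases "u0 \<in> L \<and> Suc u0 \<in> U")
        case True
        then have "f (Suc u0) \<in> Y" using fe[of u0] u0U f(2) z by auto
        then have "g (Min ?U') \<in> Y" using minU' True g by simp
        then show ?thesis using True gb unfolding bipS_def by simp
      qed (use gb in auto)
    qed
  next
    show "(\<lambda>f'. f'(u0 := z)) ` ?T \<subseteq> {f \<in> bip L U X Y. f u0 = z}"
    proof
      fix g assume "g \<in> (\<lambda>f'. f'(u0 := z)) ` ?T"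
      then obtain f' where f': "f' \<in> ?T" and g: "g = f'(u0 := z)" by blast
      have fb: "f' \<in> bip L ?U' (X - {z}) Y" using f' by (auto simp: bipS_def split: if_splits)
      have fP: "f' \<in> ?U' \<rightarrow>\<^sub>E (X - {z} \<union> Y)" and fi: "inj_on f' ?U'"
        and fe: "\<And>h. h\<in>L \<Longrightarrow> h \<in> ?U' \<Longrightarrow> Suc h \<in> ?U' \<Longrightarrow> (f' h \<in> X - {z} \<longleftrightarrow> f' (Suc h) \<in> Y)"
        using fb unfolding bip_def by auto
      have lk: "u0 \<in> L \<Longrightarrow> Suc u0 \<in> U \<Longrightarrow> f' (Suc u0) \<in> Y"
        using f' minU' by (auto simp: bipS_def)
      have vals: "\<And>h. h \<in> ?U' \<Longrightarrow> f' h \<in> X - {z} \<union> Y" using fP by auto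
      have "g \<in> bip L U X Y"
        unfolding bip_def
      proof (intro CollectI conjI)
        show "g \<in> U \<rightarrow>\<^sub>E (X \<union> Y)" using fP z u0U unfolding g by (auto simp: PiE_iff extensional_def)
        show "inj_on g U"
        proof (rule inj_onI)
          fix a b assume ab: "a \<in> U" "b \<in> U" "g a = g b"
          show "a = b"
          proof (cases "a = u0"; cases "b = u0")
            assume "a \<noteq> u0" "b \<noteq> u0" then show ?thesis using ab fi unfolding g by (auto simp: inj_on_def)
          next
            assume "a = u0" "b \<noteq> u0" then show ?thesis using ab vals[of b] zY unfolding g by auto
          next
            assume "a \<noteq> u0" "b = u0" then show ?thesis using ab vals[of a] zY unfolding g by auto
          qed simp
        qed
        show "\<forall>h\<in>L. h \<in> U \<longrightarrow> Suc h \<in> U \<longrightarrow> (g h \<in> X \<longleftrightarrow> g (Suc h) \<in> Y)"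
        proof (intro ballI impI)
          fix h assume h: "h \<in> L" "h \<in> U" "Suc h \<in> U"
          show "g h \<in> X \<longleftrightarrow> g (Suc h) \<in> Y"
          proof (cases "h = u0")
            case True
            then show ?thesis using lk h z unfolding g by auto
          next
            case False
            then have "h \<in> ?U'" "Suc h \<in> ?U'" using h u0min[of h] by auto
            moreover have "f' h \<noteq> z" "f' (Suc h) \<noteq> z" using vals[OF calculation(1)] vals[OF calculation(2)] zY by auto
            ultimately show ?thesis using fe[of h] h False unfolding g by auto
          qed
        qed
      qed
      then show "g \<in> {f \<in> bip L U X Y. f u0 = z}" unfolding g by simp
    qed
  qed
qed

definition gg :: "nat \<Rightarrow> nat \<Rightarrow> nat \<Rightarrow> nat \<Rightarrow> nat \<Rightarrow> nat" where
  "gg p m d x y = ff x (p + d) * ff y p * ff (x + y - 2*p - d) m"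

lemma gg_N1: "x * gg p m 0 (x - 1) y = gg p m 1 x y"
proof (cases "x = 0")
  case True then show ?thesis by (simp add: gg_def ff_zero)
next
  case False
  then have "x - 1 + y - 2*p = x + y - 2*p - 1" by auto
  then show ?thesis using ff_Suc'[of x p] by (simp add: gg_def)
qed

lemma gg_N2: "x * gg p m 1 y (x - 1) = gg (p + 1) m 0 x y"
proof (cases "x = 0")
  case True then show ?thesis by (simp add: gg_def ff_zero)
next
  case False
  then have "y + (x - 1) - 2*p - 1 = x + y - 2*(p+1)" by auto
  then show ?thesis using ff_Suc'[of x p] by (simp add: gg_def algebra_simps)
qed

lemma gg_sym0: "gg p m 0 x y = gg p m 0 y x"
  by (simp add: gg_def algebra_simps)

lemma gg_N4: "gg p m 1 x y + gg p m 1 y x = gg p (Suc m) 0 x y"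
proof -
  have "gg p m 1 x y + gg p m 1 y x =
     ff x (Suc p) * ff y p * ff (x + y - 2*p - 1) m + ff x p * ff y (Suc p) * ff (x + y - 2*p - 1) m"
    by (simp add: gg_def add.commute mult.commute mult.left_commute)
  also have "\<dots> = gg p (Suc m) 0 x y" unfolding ff_split by (simp add: gg_def)
  finally show ?thesis .
qed

lemma card_bipS_sum:
  assumes "finite U" "U \<noteq> {}" "finite X" "finite Y"
  shows "card (bipS L U X Y X) = (\<Sum>z\<in>X. card {f \<in> bip L U X Y. f (Min U) = z})"
proof -
  have "bipS L U X Y X = (\<Union>z\<in>X. {f \<in> bip L U X Y. f (Min U) = z})" unfolding bipS_def by auto
  moreover have "card (\<Union>z\<in>X. {f \<in> bip L U X Y. f (Min U) = z}) = (\<Sum>z\<in>X. card {f \<in> bip L U X Y. f (Min U) = z})"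
    using assms bip_finite[of U X Y L] by (intro card_UN_disjoint) auto
  ultimately show ?thesis by simp
qed

lemma bip_closed:
  fixes L :: "nat set"
  assumes "finite U"
  shows "(\<exists>C p m. \<forall>X Y :: 'a set. finite X \<longrightarrow> finite Y \<longrightarrow> X \<inter> Y = {} \<longrightarrow>
      card (bip L U X Y) = C * gg p m 0 (card X) (card Y)) \<and>
    (U \<noteq> {} \<longrightarrow> (\<exists>C p m d. d \<le> 1 \<and> (\<forall>X Y :: 'a set. finite X \<longrightarrow> finite Y \<longrightarrow> X \<inter> Y = {} \<longrightarrow>
      card (bipS L U X Y X) = C * gg p m d (card X) (card Y))))"
  using assms
proof (induction U rule: finite_psubset_induct)
  case (psubset U)
  show ?case
  proof (cases "U = {}")
    case True
    have "bip L {} X Y = {\<lambda>_. undefined}" for X Y :: "'a set" unfolding bip_def by auto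
    then have "\<forall>X Y :: 'a set. finite X \<longrightarrow> finite Y \<longrightarrow> X \<inter> Y = {} \<longrightarrow>
      card (bip L U X Y) = 1 * gg 0 0 0 (card X) (card Y)" using True by (simp add: gg_def)
    then show ?thesis using True by blast
  next
    case Une: False
    define u0 where "u0 = Min U"
    define U' where "U' = U - {u0}"
    have u0U: "u0 \<in> U" using Une psubset.hyps unfolding u0_def by simp
    have sub: "U' \<subset> U" using u0U unfolding U'_def by auto
    note IH = psubset.IH[OF sub]
    have fib: "card (bipS L U X Y X) = card X *
        card (if u0 \<in> L \<and> Suc u0 \<in> U then bipS L U' (X - {z}) Y Y else bip L U' (X - {z}) Y)"
      if XY: "finite X" "finite Y" "X \<inter> Y = {}" and "z \<in> X" and
        indep: "\<And>z'. z' \<in> X \<Longrightarrow> card (if u0 \<in> L \<and> Suc u0 \<in> U then bipS L U' (X - {z'}) Y Y else bip L U' (X - {z'}) Y)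
           = card (if u0 \<in> L \<and> Suc u0 \<in> U then bipS L U' (X - {z}) Y Y else bip L U' (X - {z}) Y)"
      for X Y :: "'a set" and z
    proof -
      have "card (bipS L U X Y X) = (\<Sum>z\<in>X. card {f \<in> bip L U X Y. f (Min U) = z})"
        using card_bipS_sum psubset.hyps Une XY by blast
      also have "\<dots> = (\<Sum>z'\<in>X. card (if u0 \<in> L \<and> Suc u0 \<in> U then bipS L U' (X - {z}) Y Y else bip L U' (X - {z}) Y))"
      proof (rule sum.cong[OF refl])
        fix z' assume z': "z' \<in> X"
        have "card {f \<in> bip L U X Y. f (Min U) = z'} = card (if u0 \<in> L \<and> Suc u0 \<in> U then bipS L U' (X - {z'}) Y Y else bip L U' (X - {z'}) Y)"
          using bip_fiber[OF psubset.hyps Une z' XY(3)] unfolding U'_def u0_def by simp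
        then show "card {f \<in> bip L U X Y. f (Min U) = z'} = card (if u0 \<in> L \<and> Suc u0 \<in> U then bipS L U' (X - {z}) Y Y else bip L U' (X - {z}) Y)"
          using indep[OF z'] by simp
      qed
      finally show ?thesis by simp
    qed
    have P1: "\<exists>C p m d. d \<le> 1 \<and> (\<forall>X Y :: 'a set. finite X \<longrightarrow> finite Y \<longrightarrow> X \<inter> Y = {} \<longrightarrow>
      card (bipS L U X Y X) = C * gg p m d (card X) (card Y))"
    proof (cases "u0 \<in> L \<and> Suc u0 \<in> U")
      case True
      then have "U' \<noteq> {}" unfolding U'_def by auto
      with conjunct2[OF IH] obtain C p m d where d: "d \<le> 1" and cf0: "\<forall>X Y :: 'a set. finite X \<longrightarrow> finite Y \<longrightarrow> X \<inter> Y = {} \<longrightarrow>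
        card (bipS L U' X Y X) = C * gg p m d (card X) (card Y)" by auto
      have cf: "card (bipS L U' X Y X) = C * gg p m d (card X) (card Y)" if "finite X" "finite Y" "X \<inter> Y = {}" for X Y :: "'a set"
        using cf0 that by simp
      have cfY: "card (bipS L U' X Y Y) = C * gg p m d (card Y) (card X)"
        if "finite X" "finite Y" "X \<inter> Y = {}" for X Y :: "'a set"
      proof -
        have "bipS L U' X Y Y = bipS L U' Y X Y" unfolding bipS_def using bip_swap[OF that(3)] by simp
        then show ?thesis using cf[of Y X] that by auto
      qed
      have main: "card (bipS L U X Y X) = card X * (C * gg p m d (card Y) (card X - 1))"
        if XY: "finite X" "finite Y" "X \<inter> Y = {}" for X Y :: "'a set"
      proof (cases "X = {}")
        case True then show ?thesis by (simp add: bipS_def bip_def)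
      next
        case False
        then obtain z where z: "z \<in> X" by blast
        have "card (bipS L U' (X - {z'}) Y Y) = C * gg p m d (card Y) (card X - 1)" if "z' \<in> X" for z'
          using cfY[of "X - {z'}" Y] XY that by auto
        then show ?thesis using fib[OF XY z] True z by simp
      qed
      show ?thesis
      proof (cases "d = 0")
        case True
        have "card (bipS L U X Y X) = C * gg p m 1 (card X) (card Y)"
          if "finite X" "finite Y" "X \<inter> Y = {}" for X Y :: "'a set"
          using main[OF that] True gg_N1[of "card X" p m "card Y"] gg_sym0[of p m "card Y" "card X - 1"]
          by (simp add: algebra_simps)
        then show ?thesis by (intro exI[of _ C] exI[of _ p] exI[of _ m] exI[of _ 1] conjI allI impI) simp_all
      next
        case False
        then have d1: "d = 1" using d by simp
        have "card (bipS L U X Y X) = C * gg (p + 1) m 0 (card X) (card Y)"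
          if "finite X" "finite Y" "X \<inter> Y = {}" for X Y :: "'a set"
          using main[OF that] d1 gg_N2[of "card X" p m "card Y"] by (simp add: algebra_simps)
        then show ?thesis by (intro exI[of _ C] exI[of _ "p+1"] exI[of _ m] exI[of _ 0] conjI allI impI) simp_all
      qed
    next
      case False
      from conjunct1[OF IH] obtain C p m where cf0: "\<forall>X Y :: 'a set. finite X \<longrightarrow> finite Y \<longrightarrow> X \<inter> Y = {} \<longrightarrow>
        card (bip L U' X Y) = C * gg p m 0 (card X) (card Y)" by auto
      have cf: "card (bip L U' X Y) = C * gg p m 0 (card X) (card Y)" if "finite X" "finite Y" "X \<inter> Y = {}" for X Y :: "'a set"
        using cf0 that by simp
      have "card (bipS L U X Y X) = C * gg p m 1 (card X) (card Y)"
        if XY: "finite X" "finite Y" "X \<inter> Y = {}" for X Y :: "'a set"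
      proof (cases "X = {}")
        case True then show ?thesis by (simp add: bipS_def bip_def gg_def)
      next
        case Xne: False
        then obtain z where z: "z \<in> X" by blast
        have "card (bip L U' (X - {z'}) Y) = C * gg p m 0 (card X - 1) (card Y)" if "z' \<in> X" for z'
          using cf[of "X - {z'}" Y] XY that by auto
        then have "card (bipS L U X Y X) = card X * (C * gg p m 0 (card X - 1) (card Y))"
          using fib[OF XY z] False z by simp
        then show ?thesis using gg_N1[of "card X" p m "card Y"] by (simp add: algebra_simps)
      qed
      then show ?thesis by (intro exI[of _ C] exI[of _ p] exI[of _ m] exI[of _ 1] conjI allI impI) simp_all
    qed
    then obtain C p m d where d: "d \<le> 1" and cf0: "\<forall>X Y :: 'a set. finite X \<longrightarrow> finite Y \<longrightarrow> X \<inter> Y = {} \<longrightarrow>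
        card (bipS L U X Y X) = C * gg p m d (card X) (card Y)" by auto
    have cf: "card (bipS L U X Y X) = C * gg p m d (card X) (card Y)" if "finite X" "finite Y" "X \<inter> Y = {}" for X Y :: "'a set"
        using cf0 that by simp
    have split: "card (bip L U X Y) = C * (gg p m d (card X) (card Y) + gg p m d (card Y) (card X))"
      if XY: "finite X" "finite Y" "X \<inter> Y = {}" for X Y :: "'a set"
    proof -
      have "bip L U X Y = bipS L U X Y X \<union> bipS L U X Y Y"
      proof -
        have "f (Min U) \<in> X \<union> Y" if "f \<in> bip L U X Y" for f using that u0U unfolding bip_def u0_def by auto
        then show ?thesis unfolding bipS_def by blast
      qed
      moreover have "bipS L U X Y X \<inter> bipS L U X Y Y = {}" using XY(3) unfolding bipS_def by auto
      moreover have "finite (bipS L U X Y X)" "finite (bipS L U X Y Y)"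
        using bip_finite[of U X Y L] XY psubset.hyps unfolding bipS_def by auto
      ultimately have "card (bip L U X Y) = card (bipS L U X Y X) + card (bipS L U X Y Y)"
        by (simp add: card_Un_disjoint)
      moreover have "bipS L U X Y Y = bipS L U Y X Y" unfolding bipS_def using bip_swap[OF XY(3)] by simp
      ultimately show ?thesis using cf[OF XY] cf[of Y X] XY by (auto simp: algebra_simps)
    qed
    have P0: "\<exists>C p m. \<forall>X Y :: 'a set. finite X \<longrightarrow> finite Y \<longrightarrow> X \<inter> Y = {} \<longrightarrow>
      card (bip L U X Y) = C * gg p m 0 (card X) (card Y)"
    proof (cases "d = 0")
      case True
      then have "card (bip L U X Y) = (2 * C) * gg p m 0 (card X) (card Y)"
        if "finite X" "finite Y" "X \<inter> Y = {}" for X Y :: "'a set"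
        using split[OF that] gg_sym0[of p m "card X" "card Y"] by simp
      then show ?thesis by (intro exI[of _ "2*C"] exI[of _ p] exI[of _ m] allI impI) simp_all
    next
      case False
      then have "d = 1" using d by simp
      then have "card (bip L U X Y) = C * gg p (Suc m) 0 (card X) (card Y)"
        if "finite X" "finite Y" "X \<inter> Y = {}" for X Y :: "'a set"
        using split[OF that] gg_N4[of p m "card X" "card Y"] by simp
      then show ?thesis by (intro exI[of _ C] exI[of _ p] exI[of _ "Suc m"] allI impI) simp_all
    qed
    show ?thesis by (intro conjI impI P0 P1)
  qed
qed

lemma bip_move:
  assumes "finite U" "finite X" "finite Y" "X \<inter> Y = {}" "v \<in> X" "card Y + 1 \<le> card X"
  shows "card (bip L U X Y) \<le> card (bip L U (X - {v}) (insert v Y))"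
proof -
  obtain C p m where cf: "\<forall>X Y :: 'a set. finite X \<longrightarrow> finite Y \<longrightarrow> X \<inter> Y = {} \<longrightarrow>
      card (bip L U X Y) = C * gg p m 0 (card X) (card Y)"
    using conjunct1[OF bip_closed[OF assms(1), where 'a='a and L=L]] by auto
  have vY: "v \<notin> Y" using assms by blast
  have c1: "card (X - {v}) = card X - 1" "card (insert v Y) = card Y + 1" using assms vY by auto
  have e: "card X - 1 + (card Y + 1) = card X + card Y" using assms by auto
  have "card (bip L U X Y) = C * (ff (card X) p * ff (card Y) p * ff (card X + card Y - 2*p) m)"
    using cf assms by (simp add: gg_def)
  also have "\<dots> \<le> C * (ff (card X - 1) p * ff (card Y + 1) p * ff (card X + card Y - 2*p) m)"
    using ff_mono_pair[of "card Y" "card X" p] assms(6) by (intro mult_le_mono2 mult_le_mono1) auto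
  also have "\<dots> = card (bip L U (X - {v}) (insert v Y))"
    using cf[rule_format, of "X - {v}" "insert v Y"] assms c1 e by (auto simp: gg_def Int_Diff Diff_Int_distrib2)
  finally show ?thesis .
qed

definition sep :: "nat \<Rightarrow> (nat \<Rightarrow> 'a set) \<Rightarrow> 'a \<Rightarrow> 'a \<Rightarrow> bool" where
  "sep k A u w = (\<exists>i<k. \<exists>j<k. i \<noteq> j \<and> u \<in> A i \<and> w \<in> A j)"

definition embs :: "nat \<Rightarrow> nat set \<Rightarrow> 'a set \<Rightarrow> 'a set set \<Rightarrow> (nat \<Rightarrow> 'a) set" where
  "embs N L VG EG = {g \<in> {0..<N} \<rightarrow>\<^sub>E VG. inj_on g {0..<N} \<and> (\<forall>h\<in>L. {g h, g (Suc h)} \<in> EG)}"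

lemma cmp_edge_iff: "{u, w} \<in> cmp_edges k A \<longleftrightarrow> sep k A u w"
proof
  assume "{u, w} \<in> cmp_edges k A"
  then obtain u' w' i j where *: "{u, w} = {u', w'}" "i < k" "j < k" "i \<noteq> j" "u' \<in> A i" "w' \<in> A j"
    unfolding cmp_edges_def by blast
  then have "(u = u' \<and> w = w') \<or> (u = w' \<and> w = u')" by (auto simp: doubleton_eq_iff)
  then show "sep k A u w" using * unfolding sep_def by metis
next
  assume "sep k A u w"
  then show "{u, w} \<in> cmp_edges k A" unfolding sep_def cmp_edges_def by blast
qed

lemma embs_cmp: "embs N L VG (cmp_edges k A) =
   {g \<in> {0..<N} \<rightarrow>\<^sub>E VG. inj_on g {0..<N} \<and> (\<forall>h\<in>L. sep k A (g h) (g (Suc h)))}"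
  unfolding embs_def cmp_edge_iff ..

lemma part_unique: "is_partition_into k A V \<Longrightarrow> u \<in> A i \<Longrightarrow> u \<in> A j \<Longrightarrow> i < k \<Longrightarrow> j < k \<Longrightarrow> i = j"
  unfolding is_partition_into_def by blast

lemma part_in: "is_partition_into k A V \<Longrightarrow> i < k \<Longrightarrow> A i \<subseteq> V"
  unfolding is_partition_into_def by blast

lemma part_some: "is_partition_into k A V \<Longrightarrow> u \<in> V \<Longrightarrow> \<exists>i<k. u \<in> A i"
  unfolding is_partition_into_def by blast

definition key :: "'a set \<Rightarrow> nat \<Rightarrow> (nat \<Rightarrow> 'a) \<Rightarrow> nat set \<times> (nat \<Rightarrow> 'a)" where
  "key W N g = ({h \<in> {0..<N}. g h \<in> W}, restrict g ({0..<N} - {h \<in> {0..<N}. g h \<in> W}))"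

definition valid :: "nat \<Rightarrow> (nat \<Rightarrow> 'a set) \<Rightarrow> 'a set \<Rightarrow> 'a set \<Rightarrow> nat \<Rightarrow> nat set \<Rightarrow> nat set \<Rightarrow> (nat \<Rightarrow> 'a) \<Rightarrow> bool" where
  "valid k A V W N L U r = (inj_on r ({0..<N} - U) \<and> r ` ({0..<N} - U) \<subseteq> V - W \<and>
     (\<forall>h\<in>L. h \<notin> U \<longrightarrow> Suc h \<notin> U \<longrightarrow> sep k A (r h) (r (Suc h))))"

lemma fiber_card:
  assumes part: "is_partition_into k A V"
    and ij: "i0 < k" "j0 < k" "i0 \<noteq> j0"
    and L: "L \<subseteq> {h. Suc h < N}"
    and U: "U \<subseteq> {0..<N}" and r: "r \<in> ({0..<N} - U) \<rightarrow>\<^sub>E V"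
  shows "card {g \<in> embs N L V (cmp_edges k A). key (A i0 \<union> A j0) N g = (U, r)} =
    (if valid k A V (A i0 \<union> A j0) N L U r then card (bip L U (A i0) (A j0)) else 0)"
proof -
  let ?X = "A i0" let ?Y = "A j0" let ?W = "A i0 \<union> A j0"
  let ?F = "{g \<in> embs N L V (cmp_edges k A). key ?W N g = (U, r)}"
  have XY: "?X \<inter> ?Y = {}" using part ij unfolding is_partition_into_def by blast
  have WV: "?W \<subseteq> V" using part_in[OF part] ij by blast
  have other: "\<exists>l<k. l \<noteq> i0 \<and> l \<noteq> j0 \<and> u \<in> A l" if "u \<in> V" "u \<notin> ?W" for u
    using part_some[OF part that(1)] that(2) by blast
  have Lb: "\<And>h. h \<in> L \<Longrightarrow> h < N \<and> Suc h < N" using L by auto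
  have fwd: "valid k A V ?W N L U r \<and> restrict g U \<in> bip L U ?X ?Y" if g: "g \<in> ?F" for g
  proof -
    have gE: "g \<in> {0..<N} \<rightarrow>\<^sub>E V" and gi: "inj_on g {0..<N}" and gs: "\<And>h. h \<in> L \<Longrightarrow> sep k A (g h) (g (Suc h))"
      using g unfolding embs_cmp by auto
    have Ueq: "U = {h \<in> {0..<N}. g h \<in> ?W}" and req: "r = restrict g ({0..<N} - U)"
      using g unfolding key_def by auto
    have "valid k A V ?W N L U r"
      unfolding valid_def
    proof (intro conjI)
      show "inj_on r ({0..<N} - U)" using gi unfolding req by (auto simp: inj_on_def)
      show "r ` ({0..<N} - U) \<subseteq> V - ?W" using gE Ueq unfolding req by auto
      show "\<forall>h\<in>L. h \<notin> U \<longrightarrow> Suc h \<notin> U \<longrightarrow> sep k A (r h) (r (Suc h))"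
        using gs Lb unfolding req by auto
    qed
    moreover have "restrict g U \<in> bip L U ?X ?Y"
      unfolding bip_def
    proof (intro CollectI conjI)
      show "restrict g U \<in> U \<rightarrow>\<^sub>E ?X \<union> ?Y" using Ueq by auto
      show "inj_on (restrict g U) U" using gi U by (auto simp: inj_on_def)
      show "\<forall>h\<in>L. h \<in> U \<longrightarrow> Suc h \<in> U \<longrightarrow> (restrict g U h \<in> ?X \<longleftrightarrow> restrict g U (Suc h) \<in> ?Y)"
      proof (intro ballI impI)
        fix h assume h: "h \<in> L" "h \<in> U" "Suc h \<in> U"
        obtain i j where s: "i < k" "j < k" "i \<noteq> j" "g h \<in> A i" "g (Suc h) \<in> A j"
          using gs[OF h(1)] unfolding sep_def by blast
        have w: "g h \<in> ?W" "g (Suc h) \<in> ?W" using h Ueq by auto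
        show "restrict g U h \<in> ?X \<longleftrightarrow> restrict g U (Suc h) \<in> ?Y"
          using h w s part_unique[OF part] ij by simp metis
      qed
    qed
    ultimately show ?thesis by simp
  qed
  show ?thesis
  proof (cases "valid k A V ?W N L U r")
    case False
    then have "?F = {}" using fwd by blast
    then have "card ?F = 0" by (simp only: card.empty)
    then show ?thesis using False by (simp only: if_False)
  next
    case True
    have ri: "inj_on r ({0..<N} - U)" and rV: "r ` ({0..<N} - U) \<subseteq> V - ?W"
      and rs: "\<And>h. h \<in> L \<Longrightarrow> h \<notin> U \<Longrightarrow> Suc h \<notin> U \<Longrightarrow> sep k A (r h) (r (Suc h))"
      using True unfolding valid_def by auto
    let ?m = "\<lambda>f h. if h \<in> U then f h else r h"
    have "card ?F = card (bip L U ?X ?Y)"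
    proof (rule bij_betw_same_card[where f = "\<lambda>g. restrict g U"], rule bij_betw_byWitness[where f' = ?m])
      show "\<forall>g\<in>?F. ?m (restrict g U) = g"
      proof
        fix g assume g: "g \<in> ?F"
        have gE: "g \<in> {0..<N} \<rightarrow>\<^sub>E V" using g unfolding embs_def by auto
        have req: "r = restrict g ({0..<N} - U)" using g unfolding key_def by auto
        show "?m (restrict g U) = g"
        proof
          fix h show "?m (restrict g U) h = g h" using gE req U by (auto simp: PiE_iff extensional_def)
        qed
      qed
    next
      show "\<forall>f\<in>bip L U ?X ?Y. restrict (?m f) U = f"
      proof
        fix f assume "f \<in> bip L U ?X ?Y"
        then have "f \<in> U \<rightarrow>\<^sub>E ?X \<union> ?Y" unfolding bip_def by auto
        then show "restrict (?m f) U = f" by (auto simp: PiE_iff extensional_def fun_eq_iff)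
      qed
    next
      show "(\<lambda>g. restrict g U) ` ?F \<subseteq> bip L U ?X ?Y" using fwd by blast
    next
      show "?m ` bip L U ?X ?Y \<subseteq> ?F"
      proof
        fix g assume "g \<in> ?m ` bip L U ?X ?Y"
        then obtain f where f: "f \<in> bip L U ?X ?Y" and g: "g = ?m f" by blast
        have fE: "f \<in> U \<rightarrow>\<^sub>E ?X \<union> ?Y" and fi: "inj_on f U"
          and fe: "\<And>h. h \<in> L \<Longrightarrow> h \<in> U \<Longrightarrow> Suc h \<in> U \<Longrightarrow> (f h \<in> ?X \<longleftrightarrow> f (Suc h) \<in> ?Y)"
          using f unfolding bip_def by auto
        have fW: "\<And>h. h \<in> U \<Longrightarrow> f h \<in> ?W" using fE by auto
        have rW: "\<And>h. h \<in> {0..<N} \<Longrightarrow> h \<notin> U \<Longrightarrow> r h \<in> V \<and> r h \<notin> ?W"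
        proof -
          fix h assume "h \<in> {0..<N}" "h \<notin> U"
          then have "r h \<in> r ` ({0..<N} - U)" by blast
          then show "r h \<in> V \<and> r h \<notin> ?W" using rV by blast
        qed
        have gE: "g \<in> {0..<N} \<rightarrow>\<^sub>E V"
          unfolding g using fE r U WV by (auto simp: PiE_iff extensional_def)
        have gi: "inj_on g {0..<N}"
        proof (rule inj_onI)
          fix a b assume ab: "a \<in> {0..<N}" "b \<in> {0..<N}" "g a = g b"
          show "a = b"
          proof (cases "a \<in> U"; cases "b \<in> U")
            assume "a \<in> U" "b \<in> U" then show ?thesis using ab fi unfolding g by (auto simp: inj_on_def)
          next
            assume "a \<in> U" "b \<notin> U" then show ?thesis using ab fW[of a] rW[of b] unfolding g by auto
          next
            assume "a \<notin> U" "b \<in> U" then show ?thesis using ab fW[of b] rW[of a] unfolding g by auto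
          next
            assume "a \<notin> U" "b \<notin> U" then show ?thesis using ab ri unfolding g by (auto simp: inj_on_def)
          qed
        qed
        have sepW: "sep k A x y" if hyp: "x \<in> ?W" "y \<in> V" "y \<notin> ?W" for x y
        proof -
          obtain l where "l < k" "l \<noteq> i0" "l \<noteq> j0" "y \<in> A l" using other hyp(2,3) by blast
          then show ?thesis using hyp ij unfolding sep_def by blast
        qed
        have sepW': "sep k A y x" if hyp: "x \<in> ?W" "y \<in> V" "y \<notin> ?W" for x y
        proof -
          obtain l where "l < k" "l \<noteq> i0" "l \<noteq> j0" "y \<in> A l" using other hyp(2,3) by blast
          then show ?thesis using hyp ij unfolding sep_def by blast
        qed
        have gs: "sep k A (g h) (g (Suc h))" if h: "h \<in> L" for h
        proof -
          have hN: "h \<in> {0..<N}" "Suc h \<in> {0..<N}" using Lb[OF h] by auto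
          show ?thesis
          proof (cases "h \<in> U"; cases "Suc h \<in> U")
            assume a: "h \<in> U" "Suc h \<in> U"
            then have "f h \<in> ?X \<longleftrightarrow> f (Suc h) \<in> ?Y" using fe h by blast
            then show ?thesis using a fW[of h] fW[of "Suc h"] ij unfolding g sep_def by auto
          next
            assume a: "h \<in> U" "Suc h \<notin> U"
            then show ?thesis using sepW[OF fW[of h]] rW[of "Suc h"] hN unfolding g by auto
          next
            assume a: "h \<notin> U" "Suc h \<in> U"
            then show ?thesis using sepW'[OF fW[of "Suc h"]] rW[of h] hN unfolding g by auto
          next
            assume a: "h \<notin> U" "Suc h \<notin> U"
            then show ?thesis using rs[OF h] unfolding g by auto
          qed
        qed
        have "g \<in> embs N L V (cmp_edges k A)" unfolding embs_cmp using gE gi gs by auto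
        moreover have "key ?W N g = (U, r)"
        proof -
          have "{h \<in> {0..<N}. g h \<in> ?W} = U" using fW rW U unfolding g by auto
          moreover have "restrict g ({0..<N} - U) = r" using r unfolding g by (auto simp: PiE_iff extensional_def fun_eq_iff)
          ultimately show ?thesis unfolding key_def by simp
        qed
        ultimately show "g \<in> ?F" by simp
      qed
    qed
    then show ?thesis using True by simp
  qed
qed

lemma card_group:
  assumes "finite S" "finite T" "g ` S \<subseteq> T"
  shows "card S = (\<Sum>y\<in>T. card {x \<in> S. g x = y})"
  using sum.group[OF assms, of "\<lambda>_. 1::nat"] by simp

lemma embs_finite: "finite VG \<Longrightarrow> finite (embs N L VG EG)"
proof -
  assume "finite VG"
  then have "finite ({0..<N} \<rightarrow>\<^sub>E VG)" by (intro finite_PiE) auto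
  moreover have "embs N L VG EG \<subseteq> {0..<N} \<rightarrow>\<^sub>E VG" unfolding embs_def by auto
  ultimately show ?thesis by (rule finite_subset[rotated])
qed

lemma embs_group:
  assumes part: "is_partition_into k A V" and fin: "finite V"
    and ij: "i0 < k" "j0 < k" "i0 \<noteq> j0" and L: "L \<subseteq> {h. Suc h < N}"
  shows "card (embs N L V (cmp_edges k A)) =
    (\<Sum>(U, r)\<in>Sigma (Pow {0..<N}) (\<lambda>U. ({0..<N} - U) \<rightarrow>\<^sub>E V).
       (if valid k A V (A i0 \<union> A j0) N L U r then card (bip L U (A i0) (A j0)) else 0))"
proof -
  let ?K = "Sigma (Pow {0..<N}) (\<lambda>U. ({0..<N} - U) \<rightarrow>\<^sub>E V)"
  have fK: "finite ?K" using fin by (intro finite_SigmaI finite_PiE) auto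
  have sub: "key (A i0 \<union> A j0) N ` embs N L V (cmp_edges k A) \<subseteq> ?K"
  proof
    fix x assume "x \<in> key (A i0 \<union> A j0) N ` embs N L V (cmp_edges k A)"
    then obtain g where g: "g \<in> embs N L V (cmp_edges k A)" and x: "x = key (A i0 \<union> A j0) N g" by blast
    have "\<forall>i\<in>{0..<N}. g i \<in> V" using g unfolding embs_def by auto
    then show "x \<in> ?K" unfolding x key_def by (auto simp: restrict_PiE_iff)
  qed
  have "card (embs N L V (cmp_edges k A)) =
      (\<Sum>y\<in>?K. card {g \<in> embs N L V (cmp_edges k A). key (A i0 \<union> A j0) N g = y})"
    by (rule card_group[OF embs_finite[OF fin] fK sub])
  also have "\<dots> = (\<Sum>(U, r)\<in>?K. (if valid k A V (A i0 \<union> A j0) N L U r then card (bip L U (A i0) (A j0)) else 0))"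
    by (rule sum.cong[OF refl]) (auto intro!: fiber_card[OF part ij L])
  finally show ?thesis .
qed

lemma move:
  assumes part: "is_partition_into k A V" and fin: "finite V"
    and ij: "i0 < k" "j0 < k" "i0 \<noteq> j0" and L: "L \<subseteq> {h. Suc h < N}"
    and v: "v \<in> A i0" and c: "card (A j0) + 1 \<le> card (A i0)"
  shows "card (embs N L V (cmp_edges k A)) \<le>
    card (embs N L V (cmp_edges k (A(i0 := A i0 - {v}, j0 := insert v (A j0)))))"
proof -
  define A' where "A' = A(i0 := A i0 - {v}, j0 := insert v (A j0))"
  have A'i: "A' i0 = A i0 - {v}" "A' j0 = insert v (A j0)" "\<And>l. l \<noteq> i0 \<Longrightarrow> l \<noteq> j0 \<Longrightarrow> A' l = A l"
    unfolding A'_def using ij by auto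
  have XY: "A i0 \<inter> A j0 = {}" using part ij unfolding is_partition_into_def by blast
  have W: "A' i0 \<union> A' j0 = A i0 \<union> A j0" using A'i v by auto
  have part': "is_partition_into k A' V"
  proof -
    have "(\<Union>i<k. A' i) = (\<Union>i<k. A i)"
    proof -
      have "(\<Union>i<k. A' i) = A' i0 \<union> A' j0 \<union> (\<Union>i\<in>{..<k} - {i0, j0}. A' i)" using ij by auto
      also have "\<dots> = A i0 \<union> A j0 \<union> (\<Union>i\<in>{..<k} - {i0, j0}. A i)" using W A'i(3) by auto
      also have "\<dots> = (\<Union>i<k. A i)" using ij by auto
      finally show ?thesis .
    qed
    moreover have "\<forall>i<k. \<forall>j<k. i \<noteq> j \<longrightarrow> A' i \<inter> A' j = {}"
    proof (intro allI impI)
      fix i j assume a: "i < k" "j < k" "i \<noteq> j"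
      have dA: "A l \<inter> A l' = {}" if "l < k" "l' < k" "l \<noteq> l'" for l l'
        using part that unfolding is_partition_into_def by blast
      have sW: "A' l \<subseteq> A i0 \<union> A j0" if "l = i0 \<or> l = j0" for l using that W by auto
      have dW: "A l \<inter> (A i0 \<union> A j0) = {}" if "l < k" "l \<noteq> i0" "l \<noteq> j0" for l
        using dA[of l i0] dA[of l j0] that ij by auto
      have d0: "A' i0 \<inter> A' j0 = {}" using A'i XY v by auto
      show "A' i \<inter> A' j = {}"
      proof (cases "i = i0 \<or> i = j0")
        case True
        show ?thesis
        proof (cases "j = i0 \<or> j = j0")
          case True
          with \<open>i = i0 \<or> i = j0\<close> a(3) have "(i = i0 \<and> j = j0) \<or> (i = j0 \<and> j = i0)" by auto
          then show ?thesis using d0 by auto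
        next
          case False
          then show ?thesis using sW[OF \<open>i = i0 \<or> i = j0\<close>] dW[of j] a A'i(3)[of j] by auto
        qed
      next
        case False
        show ?thesis
        proof (cases "j = i0 \<or> j = j0")
          case True
          then show ?thesis using sW[OF True] dW[of i] a False A'i(3)[of i] by auto
        next
          case False
          then show ?thesis using dA[OF a] A'i(3)[of i] A'i(3)[of j] \<open>\<not> (i = i0 \<or> i = j0)\<close> by auto
        qed
      qed
    qed
    ultimately show ?thesis using part unfolding is_partition_into_def by simp
  qed
  have sepeq: "sep k A' x y = sep k A x y" if "x \<notin> A i0 \<union> A j0" "y \<notin> A i0 \<union> A j0" for x y
  proof -
    have "x \<in> A' l \<longleftrightarrow> x \<in> A l" "y \<in> A' l \<longleftrightarrow> y \<in> A l" for l
      using that A'i W by (cases "l = i0 \<or> l = j0"; auto)+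
    then show ?thesis unfolding sep_def by simp
  qed
  have valideq: "valid k A' V (A i0 \<union> A j0) N L U r = valid k A V (A i0 \<union> A j0) N L U r" for U r
  proof -
    have "r h \<notin> A i0 \<union> A j0" if "r ` ({0..<N} - U) \<subseteq> V - (A i0 \<union> A j0)" "h \<in> L" "h \<notin> U" for h
    proof -
      have "h \<in> {0..<N} - U" using that L by auto
      then show ?thesis using that(1) by blast
    qed
    moreover have "r (Suc h) \<notin> A i0 \<union> A j0" if "r ` ({0..<N} - U) \<subseteq> V - (A i0 \<union> A j0)" "h \<in> L" "Suc h \<notin> U" for h
    proof -
      have "Suc h \<in> {0..<N} - U" using that L by auto
      then show ?thesis using that(1) by blast
    qed
    ultimately show ?thesis unfolding valid_def using sepeq by blast
  qed
  have fU: "finite (A i0)" "finite (A j0)" using part_in[OF part] ij fin by (auto intro: finite_subset)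
  have "card (embs N L V (cmp_edges k A)) =
    (\<Sum>(U, r)\<in>Sigma (Pow {0..<N}) (\<lambda>U. ({0..<N} - U) \<rightarrow>\<^sub>E V).
       (if valid k A V (A i0 \<union> A j0) N L U r then card (bip L U (A i0) (A j0)) else 0))"
    by (rule embs_group[OF part fin ij L])
  also have "\<dots> \<le> (\<Sum>(U, r)\<in>Sigma (Pow {0..<N}) (\<lambda>U. ({0..<N} - U) \<rightarrow>\<^sub>E V).
       (if valid k A' V (A' i0 \<union> A' j0) N L U r then card (bip L U (A' i0) (A' j0)) else 0))"
  proof (rule sum_mono)
    fix x assume x: "x \<in> Sigma (Pow {0..<N}) (\<lambda>U. ({0..<N} - U) \<rightarrow>\<^sub>E V)"
    obtain U r where xe: "x = (U, r)" by fastforce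
    have "finite U" using x xe by (auto intro: finite_subset)
    then have "card (bip L U (A i0) (A j0)) \<le> card (bip L U (A' i0) (A' j0))"
      unfolding A'i(1,2) using bip_move[OF _ fU XY v c] by blast
    then show "(case x of (U, r) \<Rightarrow> if valid k A V (A i0 \<union> A j0) N L U r then card (bip L U (A i0) (A j0)) else 0)
      \<le> (case x of (U, r) \<Rightarrow> if valid k A' V (A' i0 \<union> A' j0) N L U r then card (bip L U (A' i0) (A' j0)) else 0)"
      unfolding xe W valideq by simp
  qed
  also have "\<dots> = card (embs N L V (cmp_edges k A'))"
    by (rule embs_group[OF part' fin ij L, symmetric])
  finally show ?thesis unfolding A'_def .
qed

lemma turan_part: "1 \<le> k \<Longrightarrow> is_partition_into k (turan_parts n k) {0..<n}"
  unfolding is_partition_into_def turan_parts_def by auto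

lemma mod_window: "0 < s \<Longrightarrow> s < 2 * k \<Longrightarrow> ((s::nat) mod k = 0 \<longleftrightarrow> s = k)"
proof (cases "s < k")
  case True
  then show "0 < s \<Longrightarrow> s < 2 * k \<Longrightarrow> (s mod k = 0 \<longleftrightarrow> s = k)" by simp
next
  case False
  assume "0 < s" "s < 2 * k"
  then have "s mod k = (s - k) mod k" using False le_mod_geq by simp
  also have "\<dots> = s - k" using \<open>s < 2 * k\<close> by simp
  finally show ?thesis using False by simp
qed

lemma card_turan: "i < k \<Longrightarrow> card (turan_parts n k i) = (n + k - 1 - i) div k"
proof (induction n)
  case 0
  then show ?case by (simp add: turan_parts_def)
next
  case (Suc n)
  have k: "0 < k" using Suc.prems by simp
  have eq: "turan_parts (Suc n) k i = (if n mod k = i then insert n (turan_parts n k i) else turan_parts n k i)"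
    unfolding turan_parts_def by (auto simp: less_Suc_eq)
  have fin: "finite (turan_parts n k i)" unfolding turan_parts_def by auto
  have nin: "n \<notin> turan_parts n k i" unfolding turan_parts_def by auto
  have e2: "Suc n + k - 1 - i = Suc (n + k - 1 - i)" using Suc.prems by auto
  have m: "Suc (n + k - 1 - i) mod k = 0 \<longleftrightarrow> n mod k = i"
  proof -
    have "Suc (n + k - 1 - i) = n + (k - i)" using Suc.prems by auto
    then have "Suc (n + k - 1 - i) mod k = (n mod k + (k - i)) mod k" by (simp add: mod_add_left_eq)
    moreover have "(n mod k + (k - i)) mod k = 0 \<longleftrightarrow> n mod k = i"
    proof -
      have a: "n mod k < k" using k by simp
      have "k - i \<le> k" "0 < k - i" using Suc.prems by auto
      then have "n mod k + (k - i) < 2 * k" "0 < n mod k + (k - i)" using a by linarith+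
      then have "(n mod k + (k - i)) mod k = 0 \<longleftrightarrow> n mod k + (k - i) = k"
        using mod_window[of "n mod k + (k - i)" k] by simp
      also have "\<dots> \<longleftrightarrow> n mod k = i" using Suc.prems by auto
      finally show ?thesis .
    qed
    ultimately show ?thesis by simp
  qed
  show ?case using Suc.IH[OF Suc.prems] fin nin unfolding eq e2 div_Suc m by auto
qed

lemma turan_diff: "i < k \<Longrightarrow> j < k \<Longrightarrow> card (turan_parts n k j) \<le> card (turan_parts n k i) + 1"
proof -
  assume a: "i < k" "j < k"
  have "n + k - 1 - j \<le> (n + k - 1 - i) + k" using a by linarith
  then have "(n + k - 1 - j) div k \<le> ((n + k - 1 - i) + k) div k" by (rule div_le_mono)
  also have "\<dots> = (n + k - 1 - i) div k + 1" using a by (subst div_add_self2) auto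
  finally show ?thesis using card_turan a by simp
qed

lemma embs_inj:
  assumes partA: "is_partition_into k A V" and partB: "is_partition_into k B W"
    and finW: "finite W" and L: "L \<subseteq> {h. Suc h < N}"
    and beta: "inj_on \<beta> V" "\<And>i. i < k \<Longrightarrow> \<beta> ` A i \<subseteq> B i"
  shows "card (embs N L V (cmp_edges k A)) \<le> card (embs N L W (cmp_edges k B))"
proof -
  let ?m = "\<lambda>g. restrict (\<beta> \<circ> g) {0..<N}"
  have bW: "\<beta> x \<in> W" if xV: "x \<in> V" for x
  proof -
    obtain i where "i < k" "x \<in> A i" using part_some[OF partA xV] by blast
    then show ?thesis using beta(2) part_in[OF partB] by blast
  qed
  have "inj_on ?m (embs N L V (cmp_edges k A))"
  proof (rule inj_onI)
    fix g1 g2 assume g: "g1 \<in> embs N L V (cmp_edges k A)" "g2 \<in> embs N L V (cmp_edges k A)" "?m g1 = ?m g2"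
    show "g1 = g2"
    proof
      fix h
      show "g1 h = g2 h"
      proof (cases "h < N")
        case True
        then have "\<beta> (g1 h) = \<beta> (g2 h)" using g(3) by (metis atLeastLessThan_iff comp_apply le0 restrict_apply')
        moreover have "g1 h \<in> V" "g2 h \<in> V" using g True unfolding embs_def by auto
        ultimately show ?thesis using beta(1) by (auto simp: inj_on_def)
      next
        case False
        then show ?thesis using g unfolding embs_def by (auto simp: PiE_iff extensional_def)
      qed
    qed
  qed
  moreover have "?m ` embs N L V (cmp_edges k A) \<subseteq> embs N L W (cmp_edges k B)"
  proof
    fix g' assume "g' \<in> ?m ` embs N L V (cmp_edges k A)"
    then obtain g where g: "g \<in> embs N L V (cmp_edges k A)" and g': "g' = ?m g" by blast
    have gE: "\<forall>h\<in>{0..<N}. g h \<in> V" and gi: "inj_on g {0..<N}" and gs: "\<forall>h\<in>L. sep k A (g h) (g (Suc h))"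
      using g unfolding embs_cmp by auto
    have "g' \<in> {0..<N} \<rightarrow>\<^sub>E W" unfolding g' using gE bW by (auto simp: restrict_PiE_iff)
    moreover have "inj_on g' {0..<N}"
      unfolding g' using gi gE beta(1) by (auto simp: inj_on_def)
    moreover have "sep k B (g' h) (g' (Suc h))" if h: "h \<in> L" for h
    proof -
      obtain i j where s: "i < k" "j < k" "i \<noteq> j" "g h \<in> A i" "g (Suc h) \<in> A j" using gs h unfolding sep_def by blast
      have True: "Suc h < N" using L h by auto
        then have "g' h = \<beta> (g h)" "g' (Suc h) = \<beta> (g (Suc h))" unfolding g' by auto
        then show ?thesis using s beta(2) unfolding sep_def by blast
    qed
    ultimately show "g' \<in> embs N L W (cmp_edges k B)" unfolding embs_cmp by auto
  qed
  ultimately show ?thesis by (rule card_inj_on_le[OF _ _ embs_finite[OF finW]])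
qed

lemma move_part:
  assumes part: "is_partition_into k A V"
    and ij: "i0 < k" "j0 < k" "i0 \<noteq> j0" and v: "v \<in> A i0"
  shows "is_partition_into k (A(i0 := A i0 - {v}, j0 := insert v (A j0))) V"
proof -
  define A' where "A' = A(i0 := A i0 - {v}, j0 := insert v (A j0))"
  have A'i: "A' i0 = A i0 - {v}" "A' j0 = insert v (A j0)" "\<And>l. l \<noteq> i0 \<Longrightarrow> l \<noteq> j0 \<Longrightarrow> A' l = A l"
    unfolding A'_def using ij by auto
  have XY: "A i0 \<inter> A j0 = {}" using part ij unfolding is_partition_into_def by blast
  have W: "A' i0 \<union> A' j0 = A i0 \<union> A j0" using A'i v by auto
  have part': "is_partition_into k A' V"
  proof -
    have "(\<Union>i<k. A' i) = (\<Union>i<k. A i)"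
    proof -
      have "(\<Union>i<k. A' i) = A' i0 \<union> A' j0 \<union> (\<Union>i\<in>{..<k} - {i0, j0}. A' i)" using ij by auto
      also have "\<dots> = A i0 \<union> A j0 \<union> (\<Union>i\<in>{..<k} - {i0, j0}. A i)" using W A'i(3) by auto
      also have "\<dots> = (\<Union>i<k. A i)" using ij by auto
      finally show ?thesis .
    qed
    moreover have "\<forall>i<k. \<forall>j<k. i \<noteq> j \<longrightarrow> A' i \<inter> A' j = {}"
    proof (intro allI impI)
      fix i j assume a: "i < k" "j < k" "i \<noteq> j"
      have dA: "A l \<inter> A l' = {}" if "l < k" "l' < k" "l \<noteq> l'" for l l'
        using part that unfolding is_partition_into_def by blast
      have sW: "A' l \<subseteq> A i0 \<union> A j0" if "l = i0 \<or> l = j0" for l using that W by auto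
      have dW: "A l \<inter> (A i0 \<union> A j0) = {}" if "l < k" "l \<noteq> i0" "l \<noteq> j0" for l
        using dA[of l i0] dA[of l j0] that ij by auto
      have d0: "A' i0 \<inter> A' j0 = {}" using A'i XY v by auto
      show "A' i \<inter> A' j = {}"
      proof (cases "i = i0 \<or> i = j0")
        case True
        show ?thesis
        proof (cases "j = i0 \<or> j = j0")
          case True
          with \<open>i = i0 \<or> i = j0\<close> a(3) have "(i = i0 \<and> j = j0) \<or> (i = j0 \<and> j = i0)" by auto
          then show ?thesis using d0 by auto
        next
          case False
          then show ?thesis using sW[OF \<open>i = i0 \<or> i = j0\<close>] dW[of j] a A'i(3)[of j] by auto
        qed
      next
        case False
        show ?thesis
        proof (cases "j = i0 \<or> j = j0")
          case True
          then show ?thesis using sW[OF True] dW[of i] a False A'i(3)[of i] by auto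
        next
          case False
          then show ?thesis using dA[OF a] A'i(3)[of i] A'i(3)[of j] \<open>\<not> (i = i0 \<or> i = j0)\<close> by auto
        qed
      qed
    qed
    ultimately show ?thesis using part unfolding is_partition_into_def by simp
  qed
  then show ?thesis unfolding A'_def .
qed

lemma part_sum: "is_partition_into k A V \<Longrightarrow> finite V \<Longrightarrow> (\<Sum>i<k. card (A i)) = card V"
proof -
  assume part: "is_partition_into k A V" and fin: "finite V"
  have "card (\<Union>i\<in>{..<k}. A i) = (\<Sum>i<k. card (A i))"
    using part fin part_in[OF part] by (intro card_UN_disjoint) (auto intro: finite_subset simp: is_partition_into_def)
  then show ?thesis using part unfolding is_partition_into_def by simp
qed

lemma to_turan:
  assumes k: "1 \<le> k" and fin: "finite V" and cV: "card V = n" and L: "L \<subseteq> {h. Suc h < N}"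
  shows "is_partition_into k A V \<Longrightarrow>
    card (embs N L V (cmp_edges k A)) \<le> card (embs N L {0..<n} (cmp_edges k (turan_parts n k)))"
proof (induction "\<Sum>i<k. card (A i) - card (turan_parts n k i)" arbitrary: A rule: less_induct)
  case less
  note part = less.prems
  let ?t = "\<lambda>i. card (turan_parts n k i)"
  have tpart: "is_partition_into k (turan_parts n k) {0..<n}" using turan_part k by blast
  have finA: "finite (A i)" if "i < k" for i using part_in[OF part that] fin by (rule finite_subset)
  show ?case
  proof (cases "\<forall>i<k. card (A i) \<le> ?t i")
    case True
    have "\<forall>i\<in>{..<k}. \<exists>f. f ` A i \<subseteq> turan_parts n k i \<and> inj_on f (A i)"
    proof
      fix i assume "i \<in> {..<k}"
      then show "\<exists>f. f ` A i \<subseteq> turan_parts n k i \<and> inj_on f (A i)"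
        using card_le_inj[OF finA _ True[rule_format]] by (auto simp: turan_parts_def)
    qed
    then obtain F where F: "\<And>i. i < k \<Longrightarrow> F i ` A i \<subseteq> turan_parts n k i \<and> inj_on (F i) (A i)"
      using bchoice[of "{..<k}"] by (metis lessThan_iff)
    define \<beta> where "\<beta> x = F (SOME i. i < k \<and> x \<in> A i) x" for x
    have bi: "\<beta> x = F i x" if "i < k" "x \<in> A i" for i x
    proof -
      have "(SOME i. i < k \<and> x \<in> A i) = i"
        using that part_unique[OF part] by (intro some_equality) auto
      then show ?thesis unfolding \<beta>_def by simp
    qed
    have img: "\<beta> ` A i \<subseteq> turan_parts n k i" if "i < k" for i
      using F[OF that] bi[OF that] by auto
    have inj: "inj_on \<beta> V"
    proof (rule inj_onI)
      fix x y assume xy: "x \<in> V" "y \<in> V" "\<beta> x = \<beta> y"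
      obtain i where i: "i < k" "x \<in> A i" using part_some[OF part xy(1)] by blast
      obtain j where j: "j < k" "y \<in> A j" using part_some[OF part xy(2)] by blast
      have "\<beta> x \<in> turan_parts n k i" "\<beta> y \<in> turan_parts n k j" using img i j by auto
      then have "i = j" using xy(3) part_unique[OF tpart] i j by metis
      then show "x = y" using F[OF i(1)] bi i j xy(3) by (auto simp: inj_on_def)
    qed
    show ?thesis by (rule embs_inj[OF part tpart _ L inj img]) auto
  next
    case False
    then obtain i0 where i0: "i0 < k" "?t i0 < card (A i0)" by (auto simp: not_le)
    have "\<exists>j0<k. card (A j0) < ?t j0"
    proof (rule ccontr)
      assume "\<not> (\<exists>j0<k. card (A j0) < ?t j0)"
      then have "\<forall>j\<in>{..<k}. ?t j \<le> card (A j)" by (metis lessThan_iff not_less)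
      then have "(\<Sum>j<k. ?t j) < (\<Sum>j<k. card (A j))"
        using i0 by (intro sum_strict_mono_ex1) auto
      moreover have "(\<Sum>j<k. ?t j) = n" using part_sum[OF tpart] by simp
      moreover have "(\<Sum>j<k. card (A j)) = n" using part_sum[OF part fin] cV by simp
      ultimately show False by simp
    qed
    then obtain j0 where j0: "j0 < k" "card (A j0) < ?t j0" by blast
    have ne: "i0 \<noteq> j0" using i0 j0 by auto
    have c: "card (A j0) + 1 \<le> card (A i0)" using turan_diff[OF i0(1) j0(1), of n] i0 j0 by linarith
    obtain v where v: "v \<in> A i0" using i0 by fastforce
    define A' where "A' = A(i0 := A i0 - {v}, j0 := insert v (A j0))"
    have part': "is_partition_into k A' V" unfolding A'_def by (rule move_part[OF part i0(1) j0(1) ne v])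
    have step: "card (embs N L V (cmp_edges k A)) \<le> card (embs N L V (cmp_edges k A'))"
      unfolding A'_def by (rule move[OF part fin i0(1) j0(1) ne L v c])
    have XY: "A i0 \<inter> A j0 = {}" using part i0 j0 ne unfolding is_partition_into_def by blast
    have vj: "v \<notin> A j0" using XY v by blast
    have less: "(\<Sum>i<k. card (A' i) - ?t i) < (\<Sum>i<k. card (A i) - ?t i)"
    proof (rule sum_strict_mono_ex1)
      show "\<forall>i\<in>{..<k}. card (A' i) - ?t i \<le> card (A i) - ?t i"
      proof
        fix i assume "i \<in> {..<k}"
        show "card (A' i) - ?t i \<le> card (A i) - ?t i"
        proof (cases "i = i0")
          case True
          then show ?thesis unfolding A'_def using ne v finA[OF i0(1)] by (simp add: card_Diff_singleton)
        next
          case False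
          show ?thesis
          proof (cases "i = j0")
            case True
            then show ?thesis unfolding A'_def using ne j0 vj finA[OF j0(1)] by simp
          next
            case False
            then show ?thesis unfolding A'_def using \<open>i \<noteq> i0\<close> by simp
          qed
        qed
      qed
      show "\<exists>a\<in>{..<k}. card (A' a) - ?t a < card (A a) - ?t a"
      proof (intro bexI[of _ i0])
        have "card (A' i0) = card (A i0) - 1" unfolding A'_def using ne v finA[OF i0(1)] by (simp add: card_Diff_singleton)
        then show "card (A' i0) - ?t i0 < card (A i0) - ?t i0" using i0 by simp
      qed (use i0 in simp)
    qed simp
    have "card (embs N L V (cmp_edges k A')) \<le> card (embs N L {0..<n} (cmp_edges k (turan_parts n k)))"
      by (rule less.hyps[OF less part'])
    then show ?thesis using step by simp
  qed
qed

definition lk :: "nat set \<Rightarrow> nat set set" where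
  "lk L = {{h, Suc h} | h. h \<in> L}"

lemma graph_iso_trans: "graph_iso A EA B EB \<Longrightarrow> graph_iso B EB C EC \<Longrightarrow> graph_iso A EA C EC"
proof -
  assume "graph_iso A EA B EB" "graph_iso B EB C EC"
  then obtain f g where f: "bij_betw f A B" "(\<lambda>e. f ` e) ` EA = EB" and g: "bij_betw g B C" "(\<lambda>e. g ` e) ` EB = EC"
    unfolding graph_iso_def by blast
  have "bij_betw (g \<circ> f) A C" by (rule bij_betw_trans[OF f(1) g(1)])
  moreover have "(\<lambda>e. (g \<circ> f) ` e) ` EA = EC" using f(2) g(2) by (auto simp: image_comp[symmetric] image_image)
  ultimately show ?thesis unfolding graph_iso_def by blast
qed

lemma graph_iso_sym: "graph_iso A EA B EB \<Longrightarrow> (\<forall>e\<in>EA. e \<subseteq> A) \<Longrightarrow> graph_iso B EB A EA"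
proof -
  assume "graph_iso A EA B EB" and sub: "\<forall>e\<in>EA. e \<subseteq> A"
  then obtain f where f: "bij_betw f A B" "(\<lambda>e. f ` e) ` EA = EB" unfolding graph_iso_def by blast
  have "bij_betw (inv_into A f) B A" using f(1) by (rule bij_betw_inv_into)
  moreover have "(\<lambda>e. inv_into A f ` e) ` EB = EA"
  proof -
    have "inv_into A f ` f ` e = e" if "e \<in> EA" for e
      using f(1) sub that by (intro inv_into_image_cancel) (auto simp: bij_betw_def)
    then show ?thesis unfolding f(2)[symmetric] by (simp add: image_image)
  qed
  ultimately show ?thesis unfolding graph_iso_def by blast
qed

lemma num_copies_iso:
  assumes "graph_iso VH EH VC EC" "\<forall>e\<in>EH. e \<subseteq> VH"
  shows "num_copies VH EH VG EG = num_copies VC EC VG EG"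
proof -
  have "graph_iso V' E' VH EH \<longleftrightarrow> graph_iso V' E' VC EC" for V' and E' :: "'c set set"
    using graph_iso_trans[OF _ assms(1)] graph_iso_trans[OF _ graph_iso_sym[OF assms]] by blast
  then show ?thesis unfolding num_copies_def by simp
qed

definition isoset :: "nat \<Rightarrow> nat set \<Rightarrow> 'a set \<Rightarrow> 'a set set \<Rightarrow> (nat \<Rightarrow> 'a) set" where
  "isoset N L V' E' = {g \<in> {0..<N} \<rightarrow>\<^sub>E V'. bij_betw g {0..<N} V' \<and> (\<lambda>e. g ` e) ` lk L = E'}"

lemma lk_sub: "L \<subseteq> {h. Suc h < N} \<Longrightarrow> e \<in> lk L \<Longrightarrow> e \<subseteq> {0..<N}"
  unfolding lk_def by auto

lemma restrict_img: "e \<subseteq> S \<Longrightarrow> restrict g S ` e = g ` e"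
  by auto

lemma iso_card:
  assumes L: "L \<subseteq> {h. Suc h < N}"
    and iso: "graph_iso V' E' {0..<N} (lk L)" and sub: "\<forall>e\<in>E'. e \<subseteq> V'"
  shows "card (isoset N L V' E') = card (isoset N L {0..<N} (lk L))"
proof -
  obtain f where f: "bij_betw f V' {0..<N}" "(\<lambda>e. f ` e) ` E' = lk L" using iso unfolding graph_iso_def by blast
  have finj: "inj_on f V'" and fimg: "f ` V' = {0..<N}" using f(1) by (auto simp: bij_betw_def)
  define h0 where "h0 = restrict (inv_into V' f) {0..<N}"
  have h0b: "bij_betw h0 {0..<N} V'" unfolding h0_def
    using bij_betw_inv_into[OF f(1)] by (rule bij_betw_cong[THEN iffD1, rotated]) auto
  have h0in: "h0 x \<in> V'" if "x \<in> {0..<N}" for x using h0b that by (auto simp: bij_betw_def)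
  have fh0: "f (h0 x) = x" if x: "x \<in> {0..<N}" for x
  proof -
    have "x \<in> f ` V'" using x fimg by simp
    then have "f (inv_into V' f x) = x" by (rule f_inv_into_f)
    then show ?thesis unfolding h0_def using x by simp
  qed
  have h0f: "h0 (f y) = y" if y: "y \<in> V'" for y
  proof -
    have "f y \<in> {0..<N}" using y fimg by blast
    then have "h0 (f y) = inv_into V' f (f y)" unfolding h0_def by simp
    also have "\<dots> = y" using finj y by (rule inv_into_f_f)
    finally show ?thesis .
  qed
  have h0e: "(\<lambda>e. h0 ` e) ` lk L = E'"
  proof -
    have "h0 ` f ` e = e" if "e \<in> E'" for e
    proof -
      have eV: "e \<subseteq> V'" using sub that by blast
      have "(\<lambda>x. h0 (f x)) ` e = (\<lambda>x. x) ` e" using eV h0f by (intro image_cong) auto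
      then show ?thesis by (simp add: image_image)
    qed
    then show ?thesis unfolding f(2)[symmetric] by (simp add: image_image)
  qed
  have "bij_betw (\<lambda>\<sigma>. restrict (h0 \<circ> \<sigma>) {0..<N}) (isoset N L {0..<N} (lk L)) (isoset N L V' E')"
  proof (rule bij_betw_byWitness[where f' = "\<lambda>g. restrict (f \<circ> g) {0..<N}"])
    show "\<forall>\<sigma>\<in>isoset N L {0..<N} (lk L). restrict (f \<circ> restrict (h0 \<circ> \<sigma>) {0..<N}) {0..<N} = \<sigma>"
    proof
      fix \<sigma> assume s: "\<sigma> \<in> isoset N L {0..<N} (lk L)"
      then have "\<sigma> \<in> {0..<N} \<rightarrow>\<^sub>E {0..<N}" unfolding isoset_def by auto
      then show "restrict (f \<circ> restrict (h0 \<circ> \<sigma>) {0..<N}) {0..<N} = \<sigma>"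
        using fh0 by (auto simp: fun_eq_iff PiE_iff extensional_def)
    qed
    show "\<forall>g\<in>isoset N L V' E'. restrict (h0 \<circ> restrict (f \<circ> g) {0..<N}) {0..<N} = g"
    proof
      fix g assume s: "g \<in> isoset N L V' E'"
      then have "g \<in> {0..<N} \<rightarrow>\<^sub>E V'" unfolding isoset_def by auto
      then show "restrict (h0 \<circ> restrict (f \<circ> g) {0..<N}) {0..<N} = g"
        using h0f by (auto simp: fun_eq_iff PiE_iff extensional_def)
    qed
    show "(\<lambda>\<sigma>. restrict (h0 \<circ> \<sigma>) {0..<N}) ` isoset N L {0..<N} (lk L) \<subseteq> isoset N L V' E'"
    proof
      fix g assume "g \<in> (\<lambda>\<sigma>. restrict (h0 \<circ> \<sigma>) {0..<N}) ` isoset N L {0..<N} (lk L)"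
      then obtain \<sigma> where s: "\<sigma> \<in> isoset N L {0..<N} (lk L)" and g: "g = restrict (h0 \<circ> \<sigma>) {0..<N}" by blast
      have sb: "bij_betw \<sigma> {0..<N} {0..<N}" and se: "(\<lambda>e. \<sigma> ` e) ` lk L = lk L" using s unfolding isoset_def by auto
      have gb: "bij_betw g {0..<N} V'" unfolding g
        using bij_betw_trans[OF sb h0b] by (rule bij_betw_cong[THEN iffD1, rotated]) auto
      moreover have "g \<in> {0..<N} \<rightarrow>\<^sub>E V'" using gb unfolding g by (auto simp: bij_betw_def)
      moreover have "(\<lambda>e. g ` e) ` lk L = E'"
      proof -
        have "(\<lambda>e. g ` e) ` lk L = (\<lambda>e. h0 ` (\<sigma> ` e)) ` lk L"
        proof (rule image_cong[OF refl])
          fix e assume "e \<in> lk L"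
          then have "e \<subseteq> {0..<N}" by (rule lk_sub[OF L])
          then show "g ` e = h0 ` (\<sigma> ` e)" unfolding g restrict_img[OF \<open>e \<subseteq> {0..<N}\<close>] by (simp add: image_comp)
        qed
        also have "\<dots> = (\<lambda>e. h0 ` e) ` ((\<lambda>e. \<sigma> ` e) ` lk L)" by (simp add: image_image)
        finally have "(\<lambda>e. g ` e) ` lk L = (\<lambda>e. h0 ` e) ` ((\<lambda>e. \<sigma> ` e) ` lk L)" .
        then show ?thesis using se h0e by simp
      qed
      ultimately show "g \<in> isoset N L V' E'" unfolding isoset_def by blast
    qed
    show "(\<lambda>g. restrict (f \<circ> g) {0..<N}) ` isoset N L V' E' \<subseteq> isoset N L {0..<N} (lk L)"
    proof
      fix \<sigma> assume "\<sigma> \<in> (\<lambda>g. restrict (f \<circ> g) {0..<N}) ` isoset N L V' E'"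
      then obtain g where s: "g \<in> isoset N L V' E'" and g: "\<sigma> = restrict (f \<circ> g) {0..<N}" by blast
      have gb: "bij_betw g {0..<N} V'" and ge: "(\<lambda>e. g ` e) ` lk L = E'" using s unfolding isoset_def by auto
      have sb: "bij_betw \<sigma> {0..<N} {0..<N}" unfolding g
        using bij_betw_trans[OF gb f(1)] by (rule bij_betw_cong[THEN iffD1, rotated]) auto
      moreover have "\<sigma> \<in> {0..<N} \<rightarrow>\<^sub>E {0..<N}" using sb unfolding g by (auto simp: bij_betw_def)
      moreover have "(\<lambda>e. \<sigma> ` e) ` lk L = lk L"
      proof -
        have "(\<lambda>e. \<sigma> ` e) ` lk L = (\<lambda>e. f ` (g ` e)) ` lk L"
        proof (rule image_cong[OF refl])
          fix e assume "e \<in> lk L"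
          then have "e \<subseteq> {0..<N}" by (rule lk_sub[OF L])
          then show "\<sigma> ` e = f ` (g ` e)" unfolding g restrict_img[OF \<open>e \<subseteq> {0..<N}\<close>] by (simp add: image_comp)
        qed
        also have "\<dots> = (\<lambda>e. f ` e) ` ((\<lambda>e. g ` e) ` lk L)" by (simp add: image_image)
        finally have "(\<lambda>e. \<sigma> ` e) ` lk L = (\<lambda>e. f ` e) ` ((\<lambda>e. g ` e) ` lk L)" .
        then show ?thesis using ge f(2) by simp
      qed
      ultimately show "\<sigma> \<in> isoset N L {0..<N} (lk L)" unfolding isoset_def by blast
    qed
  qed
  then show ?thesis by (rule bij_betw_same_card[symmetric])
qed

lemma copies_embs:
  assumes L: "L \<subseteq> {h. Suc h < N}" and fin: "finite VG"
  shows "num_copies {0..<N} (lk L) VG EG * card (isoset N L {0..<N} (lk L)) = card (embs N L VG EG)"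
proof -
  let ?C = "{(V', E'). V' \<subseteq> VG \<and> E' \<subseteq> EG \<and> (\<forall>e\<in>E'. e \<subseteq> V') \<and> graph_iso V' E' {0..<N} (lk L)}"
  let ?P = "\<lambda>g. (g ` {0..<N}, (\<lambda>e. g ` e) ` lk L)"
  have nc: "num_copies {0..<N} (lk L) VG EG = card ?C" unfolding num_copies_def ..
  have finC: "finite ?C"
  proof (rule finite_subset)
    show "?C \<subseteq> Pow VG \<times> Pow (Pow VG)" by auto
    show "finite (Pow VG \<times> Pow (Pow VG))" using fin by simp
  qed
  have edge: "g ` {h, Suc h} = {g h, g (Suc h)}" for g :: "nat \<Rightarrow> 'b" and h by auto
  have lkE: "(\<forall>e\<in>lk L. P e) \<longleftrightarrow> (\<forall>h\<in>L. P {h, Suc h})" for P unfolding lk_def by blast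
  have PC: "?P ` embs N L VG EG \<subseteq> ?C"
  proof
    fix c assume "c \<in> ?P ` embs N L VG EG"
    then obtain g where g: "g \<in> embs N L VG EG" and c: "c = ?P g" by blast
    have gE: "g \<in> {0..<N} \<rightarrow>\<^sub>E VG" and gi: "inj_on g {0..<N}" and gs: "\<forall>h\<in>L. {g h, g (Suc h)} \<in> EG"
      using g unfolding embs_def by auto
    have s1: "g ` {0..<N} \<subseteq> VG" using gE by auto
    have s2: "(\<lambda>e. g ` e) ` lk L \<subseteq> EG" using gs unfolding lk_def by auto
    have s3: "\<forall>e\<in>(\<lambda>e. g ` e) ` lk L. e \<subseteq> g ` {0..<N}" using lk_sub[OF L] by blast
    have gb: "bij_betw g {0..<N} (g ` {0..<N})" using gi by (rule inj_on_imp_bij_betw)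
    have "graph_iso (g ` {0..<N}) ((\<lambda>e. g ` e) ` lk L) {0..<N} (lk L)"
    proof (rule graph_iso_sym)
      show "graph_iso {0..<N} (lk L) (g ` {0..<N}) ((\<lambda>e. g ` e) ` lk L)"
        unfolding graph_iso_def using gb by blast
      show "\<forall>e\<in>lk L. e \<subseteq> {0..<N}" using lk_sub[OF L] by blast
    qed
    then show "c \<in> ?C" unfolding c using s1 s2 s3 by simp
  qed
  have fib: "{g \<in> embs N L VG EG. ?P g = c} = isoset N L (fst c) (snd c)" if c: "c \<in> ?C" for c
  proof -
    obtain V' E' where ce: "c = (V', E')" by fastforce
    have V'G: "V' \<subseteq> VG" and E'G: "E' \<subseteq> EG" using c ce by auto
    show ?thesis
    proof (intro set_eqI iffI)
      fix g assume "g \<in> {g \<in> embs N L VG EG. ?P g = c}"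
      then have g: "g \<in> embs N L VG EG" and Pg: "?P g = (V', E')" using ce by auto
      have gE: "g \<in> {0..<N} \<rightarrow>\<^sub>E VG" and gi: "inj_on g {0..<N}" using g unfolding embs_def by auto
      have "g ` {0..<N} = V'" "(\<lambda>e. g ` e) ` lk L = E'" using Pg by auto
      moreover have "bij_betw g {0..<N} (g ` {0..<N})" using gi by (rule inj_on_imp_bij_betw)
      moreover have "g \<in> {0..<N} \<rightarrow>\<^sub>E g ` {0..<N}" using gE by (auto simp: PiE_iff)
      ultimately show "g \<in> isoset N L (fst c) (snd c)" unfolding isoset_def ce by auto
    next
      fix g assume "g \<in> isoset N L (fst c) (snd c)"
      then have gE: "g \<in> {0..<N} \<rightarrow>\<^sub>E V'" and gb: "bij_betw g {0..<N} V'" and ge: "(\<lambda>e. g ` e) ` lk L = E'"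
        unfolding isoset_def ce by auto
      have "g \<in> {0..<N} \<rightarrow>\<^sub>E VG" using gE V'G by (auto simp: PiE_iff)
      moreover have "inj_on g {0..<N}" using gb by (auto simp: bij_betw_def)
      moreover have "\<forall>h\<in>L. {g h, g (Suc h)} \<in> EG"
      proof
        fix h assume h: "h \<in> L"
        have "g ` {h, Suc h} \<in> E'" using h ge unfolding lk_def by blast
        then show "{g h, g (Suc h)} \<in> EG" using E'G edge by auto
      qed
      moreover have "?P g = c" using gb ge ce by (auto simp: bij_betw_def)
      ultimately show "g \<in> {g \<in> embs N L VG EG. ?P g = c}" unfolding embs_def by auto
    qed
  qed
  have "card (embs N L VG EG) = (\<Sum>c\<in>?C. card {g \<in> embs N L VG EG. ?P g = c})"
    by (rule card_group[OF embs_finite[OF fin] finC PC])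
  also have "\<dots> = (\<Sum>c\<in>?C. card (isoset N L {0..<N} (lk L)))"
  proof (rule sum.cong[OF refl])
    fix c assume c: "c \<in> ?C"
    obtain V' E' where ce: "c = (V', E')" by fastforce
    have "graph_iso V' E' {0..<N} (lk L)" "\<forall>e\<in>E'. e \<subseteq> V'" using c ce by auto
    then have "card (isoset N L V' E') = card (isoset N L {0..<N} (lk L))" by (rule iso_card[OF L])
    moreover have "card {g \<in> embs N L VG EG. ?P g = c} = card (isoset N L V' E')"
      using fib[OF c] ce by simp
    ultimately show "card {g \<in> embs N L VG EG. ?P g = c} = card (isoset N L {0..<N} (lk L))" by simp
  qed
  also have "\<dots> = card ?C * card (isoset N L {0..<N} (lk L))" by simp
  finally show ?thesis unfolding nc by simp
qed

lemma aut_pos: "L \<subseteq> {h. Suc h < N} \<Longrightarrow> 0 < card (isoset N L {0..<N} (lk L))"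
proof -
  assume L: "L \<subseteq> {h. Suc h < N}"
  have "restrict id {0..<N} \<in> isoset N L {0..<N} (lk L)"
  proof -
    have "(\<lambda>e. restrict id {0..<N} ` e) ` lk L = (\<lambda>e. e) ` lk L"
    proof (rule image_cong[OF refl])
      fix e assume "e \<in> lk L"
      then have "e \<subseteq> {0..<N}" by (rule lk_sub[OF L])
      then show "restrict id {0..<N} ` e = e" unfolding restrict_img[OF \<open>e \<subseteq> {0..<N}\<close>] by simp
    qed
    then show ?thesis unfolding isoset_def by (auto simp: bij_betw_def inj_on_def)
  qed
  moreover have "finite (isoset N L {0..<N} (lk L))"
  proof (rule finite_subset)
    show "isoset N L {0..<N} (lk L) \<subseteq> {0..<N} \<rightarrow>\<^sub>E {0..<N}" unfolding isoset_def by auto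
  qed (auto intro: finite_PiE)
  ultimately show ?thesis by (auto simp: card_gt_0_iff)
qed

lemma lk_Un: "lk (A \<union> B) = lk A \<union> lk B" unfolding lk_def by blast

lemma shift_path: "(\<lambda>e. (\<lambda>x. c + x) ` e) ` path_edges m = lk {c + i | i. Suc i < m}"
  unfolding path_edges_def lk_def
proof (intro set_eqI iffI)
  fix x assume "x \<in> (\<lambda>e. (\<lambda>x. c + x) ` e) ` {{i, Suc i} |i. Suc i < m}"
  then obtain i where i: "Suc i < m" "x = (\<lambda>x. c + x) ` {i, Suc i}" by blast
  show "x \<in> {{h, Suc h} |h. h \<in> {c + i |i. Suc i < m}}"
    by (rule CollectI, rule exI[of _ "c + i"]) (use i in auto)
next
  fix x assume "x \<in> {{h, Suc h} |h. h \<in> {c + i |i. Suc i < m}}"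
  then obtain i where i: "Suc i < m" "x = {c + i, Suc (c + i)}" by blast
  show "x \<in> (\<lambda>e. (\<lambda>x. c + x) ` e) ` {{i, Suc i} |i. Suc i < m}"
    by (rule image_eqI[of _ _ "{i, Suc i}"]) (use i in auto)
qed

lemma concrete:
  "finite P \<Longrightarrow> (\<forall>B\<in>P. \<forall>B'\<in>P. B \<noteq> B' \<longrightarrow> B \<inter> B' = {}) \<Longrightarrow> (\<forall>e\<in>E. \<exists>B\<in>P. e \<subseteq> B) \<Longrightarrow>
   (\<forall>B\<in>P. is_path B {e\<in>E. e \<subseteq> B}) \<Longrightarrow>
   \<exists>N L. L \<subseteq> {h. Suc h < N} \<and> graph_iso (\<Union>P) E {0..<N} (lk L)"
proof (induction P arbitrary: E rule: finite_induct)
  case empty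
  then have "E = {}" by auto
  then have "(\<lambda>e. (\<lambda>_. 0::nat) ` e) ` E = lk {}" by (simp add: lk_def)
  moreover have "bij_betw (\<lambda>_. 0::nat) (\<Union>{}) {0..<0}" by (simp add: bij_betw_def)
  ultimately have "graph_iso (\<Union>{}) E {0..<0} (lk {})" unfolding graph_iso_def by blast
  then show ?case by blast
next
  case (insert B P)
  define E' where "E' = {e \<in> E. \<exists>B'\<in>P. e \<subseteq> B'}"
  have "\<exists>N L. L \<subseteq> {h. Suc h < N} \<and> graph_iso (\<Union>P) E' {0..<N} (lk L)"
  proof (rule insert.IH)
    show "\<forall>B\<in>P. \<forall>B'\<in>P. B \<noteq> B' \<longrightarrow> B \<inter> B' = {}" using insert.prems(1) by blast
    show "\<forall>e\<in>E'. \<exists>B\<in>P. e \<subseteq> B" unfolding E'_def by blast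
    show "\<forall>B\<in>P. is_path B {e \<in> E'. e \<subseteq> B}"
    proof
      fix B' assume B': "B' \<in> P"
      have "{e \<in> E'. e \<subseteq> B'} = {e \<in> E. e \<subseteq> B'}" unfolding E'_def using B' by blast
      then show "is_path B' {e \<in> E'. e \<subseteq> B'}" using insert.prems(3) B' by simp
    qed
  qed
  then obtain N' L' where L': "L' \<subseteq> {h. Suc h < N'}" and iso': "graph_iso (\<Union>P) E' {0..<N'} (lk L')"
    by blast
  from iso' obtain g' where g': "bij_betw g' (\<Union>P) {0..<N'}" "(\<lambda>e. g' ` e) ` E' = lk L'"
    unfolding graph_iso_def by blast
  have "is_path B {e\<in>E. e \<subseteq> B}" using insert.prems(3) by simp
  then obtain m where m: "1 \<le> m" and isoB: "graph_iso B {e\<in>E. e \<subseteq> B} {0..<m} (path_edges m)"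
    unfolding is_path_def by blast
  from isoB obtain f where f: "bij_betw f B {0..<m}" "(\<lambda>e. f ` e) ` {e\<in>E. e \<subseteq> B} = path_edges m"
    unfolding graph_iso_def by blast
  have disj: "B \<inter> \<Union>P = {}"
  proof -
    have "B \<inter> B' = {}" if "B' \<in> P" for B' using insert.prems(1) insert.hyps(2) that by auto
    then show ?thesis by blast
  qed
  define g where "g x = (if x \<in> B then N' + f x else g' x)" for x
  have b1: "bij_betw g B {N'..<N'+m}"
  proof -
    have "bij_betw (\<lambda>x. N' + x) {0..<m} {N'..<N'+m}"
      by (rule bij_betwI[where g = "\<lambda>x. x - N'"]) auto
    then have "bij_betw ((\<lambda>x. N' + x) \<circ> f) B {N'..<N'+m}" by (rule bij_betw_trans[OF f(1)])
    moreover have "bij_betw g B {N'..<N'+m} \<longleftrightarrow> bij_betw ((\<lambda>x. N' + x) \<circ> f) B {N'..<N'+m}"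
      by (rule bij_betw_cong) (simp add: g_def)
    ultimately show ?thesis by simp
  qed
  have "bij_betw g (\<Union>P) {0..<N'} \<longleftrightarrow> bij_betw g' (\<Union>P) {0..<N'}"
    by (rule bij_betw_cong) (use disj in \<open>auto simp: g_def\<close>)
  then have b2: "bij_betw g (\<Union>P) {0..<N'}" using g'(1) by simp
  have bij: "bij_betw g (\<Union>(insert B P)) {0..<N' + m}"
  proof -
    have "bij_betw g (B \<union> \<Union>P) ({N'..<N'+m} \<union> {0..<N'})"
      by (rule bij_betw_combine[OF b1 b2]) auto
    moreover have "{N'..<N'+m} \<union> {0..<N'} = {0..<N' + m}" by auto
    ultimately show ?thesis by simp
  qed
  have Esplit: "E = {e\<in>E. e \<subseteq> B} \<union> E'" using insert.prems(2) unfolding E'_def by blast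
  have i1: "(\<lambda>e. g ` e) ` {e\<in>E. e \<subseteq> B} = lk {N' + i | i. Suc i < m}"
  proof -
    have "(\<lambda>e. g ` e) ` {e\<in>E. e \<subseteq> B} = (\<lambda>e. (\<lambda>x. N' + x) ` (f ` e)) ` {e\<in>E. e \<subseteq> B}"
    proof (rule image_cong[OF refl])
      fix e assume "e \<in> {e\<in>E. e \<subseteq> B}"
      then show "g ` e = (\<lambda>x. N' + x) ` (f ` e)" unfolding g_def by auto
    qed
    also have "\<dots> = (\<lambda>e. (\<lambda>x. N' + x) ` e) ` ((\<lambda>e. f ` e) ` {e\<in>E. e \<subseteq> B})" by (simp add: image_image)
    also have "\<dots> = lk {N' + i | i. Suc i < m}" unfolding f(2) by (rule shift_path)
    finally show ?thesis .
  qed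
  have i2: "(\<lambda>e. g ` e) ` E' = lk L'"
  proof -
    have "(\<lambda>e. g ` e) ` E' = (\<lambda>e. g' ` e) ` E'"
    proof (rule image_cong[OF refl])
      fix e assume "e \<in> E'"
      then have "e \<inter> B = {}" unfolding E'_def using disj by blast
      then show "g ` e = g' ` e" unfolding g_def by auto
    qed
    then show ?thesis using g'(2) by simp
  qed
  have "(\<lambda>e. g ` e) ` E = (\<lambda>e. g ` e) ` ({e\<in>E. e \<subseteq> B} \<union> E')"
    using Esplit by (rule arg_cong)
  also have "\<dots> = (\<lambda>e. g ` e) ` {e\<in>E. e \<subseteq> B} \<union> (\<lambda>e. g ` e) ` E'" by (rule image_Un)
  also have "\<dots> = lk ({N' + i | i. Suc i < m} \<union> L')" unfolding lk_Un i1 i2 ..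
  finally have "(\<lambda>e. g ` e) ` E = lk ({N' + i | i. Suc i < m} \<union> L')" .
  moreover have "{N' + i | i. Suc i < m} \<union> L' \<subseteq> {h. Suc h < N' + m}" using L' by auto
  moreover have "graph_iso (\<Union>(insert B P)) E {0..<N' + m} (lk ({N' + i | i. Suc i < m} \<union> L'))"
    unfolding graph_iso_def by (rule exI[of _ g], rule conjI[OF bij]) fact
  ultimately show ?case by blast
qed

lemma lf_concrete:
  assumes "linear_forest VH EH"
  shows "\<exists>N L. L \<subseteq> {h. Suc h < N} \<and> graph_iso VH EH {0..<N} (lk L)"
proof -
  have wf: "wf_graph VH EH" and ex: "\<exists>P. (\<Union>P = VH) \<and> (\<forall>B\<in>P. \<forall>B'\<in>P. B \<noteq> B' \<longrightarrow> B \<inter> B' = {}) \<and>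
          (\<forall>e\<in>EH. \<exists>B\<in>P. e \<subseteq> B) \<and> (\<forall>B\<in>P. is_path B {e\<in>EH. e \<subseteq> B})"
    using assms unfolding linear_forest_def by auto
  have fin: "finite VH" using wf unfolding wf_graph_def by simp
  from ex obtain P where P: "\<Union>P = VH" "\<forall>B\<in>P. \<forall>B'\<in>P. B \<noteq> B' \<longrightarrow> B \<inter> B' = {}"
    "\<forall>e\<in>EH. \<exists>B\<in>P. e \<subseteq> B" "\<forall>B\<in>P. is_path B {e\<in>EH. e \<subseteq> B}" by blast
  have "P \<subseteq> Pow VH" using P(1) by blast
  moreover have "finite (Pow VH)" using fin by simp
  ultimately have "finite P" by (rule finite_subset)
  from concrete[OF this P(2-4)] show ?thesis unfolding P(1) .
qed

theorem theorem3:
  fixes VH :: "'b set" and EH :: "'b set set"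
    and V :: "'a set" and A :: "nat \<Rightarrow> 'a set" and k n :: nat
  assumes "linear_forest VH EH"
    and "k \<ge> 1" and "n \<ge> 1"
    and "finite V" and "card V = n"
    and "is_partition_into k A V"
  shows "num_copies VH EH V (cmp_edges k A) \<le> num_copies VH EH {0..<n} (turan_edges n k)"
proof -
  obtain N L where L: "L \<subseteq> {h. Suc h < N}" and iso: "graph_iso VH EH {0..<N} (lk L)"
    using lf_concrete[OF assms(1)] by blast
  have sub: "\<forall>e\<in>EH. e \<subseteq> VH" using assms(1) unfolding linear_forest_def wf_graph_def by blast
  have e1: "num_copies VH EH V (cmp_edges k A) = num_copies {0..<N} (lk L) V (cmp_edges k A)"
    by (rule num_copies_iso[OF iso sub])
  have e2: "num_copies VH EH {0..<n} (turan_edges n k) = num_copies {0..<N} (lk L) {0..<n} (cmp_edges k (turan_parts n k))"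
    unfolding turan_edges_def by (rule num_copies_iso[OF iso sub])
  define \<alpha> where "\<alpha> = card (isoset N L {0..<N} (lk L))"
  have apos: "0 < \<alpha>" unfolding \<alpha>_def by (rule aut_pos[OF L])
  have c1: "num_copies {0..<N} (lk L) V (cmp_edges k A) * \<alpha> = card (embs N L V (cmp_edges k A))"
    unfolding \<alpha>_def by (rule copies_embs[OF L assms(4)])
  have c2: "num_copies {0..<N} (lk L) {0..<n} (cmp_edges k (turan_parts n k)) * \<alpha> =
      card (embs N L {0..<n} (cmp_edges k (turan_parts n k)))"
    unfolding \<alpha>_def by (rule copies_embs[OF L]) simp
  have le: "card (embs N L V (cmp_edges k A)) \<le> card (embs N L {0..<n} (cmp_edges k (turan_parts n k)))"
    by (rule to_turan[OF assms(2) assms(4) assms(5) L assms(6)])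
  have "num_copies {0..<N} (lk L) V (cmp_edges k A) * \<alpha> \<le>
      num_copies {0..<N} (lk L) {0..<n} (cmp_edges k (turan_parts n k)) * \<alpha>"
    unfolding c1 c2 by (rule le)
  then have "num_copies {0..<N} (lk L) V (cmp_edges k A) \<le> num_copies {0..<N} (lk L) {0..<n} (cmp_edges k (turan_parts n k))"
    using apos by simp
  then show ?thesis unfolding e1 e2 .
qed


end
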